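(* Let $A$ be a subalgebra of a $K$-algebra $E$, $\Delta\subseteq\mathrm{Der}_A(E)$, $I$ an ideal of $E$, and $S$ a left denominator set of $E$ with $\mathrm{ass}_E(S)=I$ and $S\subseteq N_\Delta(E)_0$. Let $\overline{E}=E/I$, $I'=A\cap I$, $\overline{A}=A/I'$, $\overline{S}=\{s+I\mid s\in S\}$. Then: (1) $I$ is $\Delta$-stable, i.e. $\delta(I)\subseteq I$ for all $\delta\in\Delta$; hence each $\delta$ induces $\overline{\delta}\in\mathrm{Der}_{\overline{A}}(\overline{E})$, $\overline{\delta}(e+I)=\delta(e)+I$; set $\overline{\Delta}=\{\overline{\delta}\mid\delta\in\Delta\}$. (2) If $\Delta$ is finite, then $S$ is a left denominator set of $N_\Delta(E)$ with $\mathrm{ass}_{N_\Delta(E)}(S)=N_\Delta(E)\cap I$. (3) If $\Delta$ is finite, then $N_\Delta(S^{-1}E)\cong S^{-1}N_\Delta(E)$. (4) If $\Delta$ is finite, then $N_\Delta(S^{-1}E)_i\cong S^{-1}N_\Delta(E)_i$ for all $i\ge0$. (5) $\overline{S}^{-1}\overline{E}\cong S^{-1}E$, $\overline{S}^{-1}N_{\overline{\Delta}}(\overline{E})\cong N_{\overline{\Delta}}(\overline{S}^{-1}\overline{E})\cong N_\Delta(S^{-1}E)$, and $\overline{S}^{-1}N_{\overline{\Delta}}(\overline{E})_i\cong N_{\overline{\Delta}}(\overline{S}^{-1}\overline{E})_i\cong N_\Delta(S^{-1}E)_i$ for all $i\geq0$.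
   Context: $\mathrm{Der}_A(E)$ is the set of derivations of $E$ that are $A$-module homomorphisms (derivations of $S^{-1}E$ are extended by $\delta(s^{-1}e)=s^{-1}\delta(e)$). For $i\ge1$, $\Delta^i=\{\delta_1\cdots\delta_i\mid\delta_j\in\Delta\}$; for an algebra $B$ with $\Delta$ acting by derivations, $N_\Delta(B)_i=\{b\in B\mid\Delta^{i+1}b=0\}$ ($i\ge0$) and $N_\Delta(B)=\bigcup_iN_\Delta(B)_i$. A left denominator set $S$ of a ring $B$ is a multiplicative left Ore set such that $bs=0$ ($b\in B,s\in S$) implies $tb=0$ for some $t\in S$; $\mathrm{ass}_B(S)=\{b\in B\mid sb=0\text{ for some }s\in S\}$; $S^{-1}B$ is the left localization. *)

theory Defs
  imports "HOL-Algebra.Algebra"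
begin

definition kalgebra :: "('k,'a) ring_scheme \<Rightarrow> ('r,'b) ring_scheme \<Rightarrow> ('k \<Rightarrow> 'r) \<Rightarrow> bool" where
  "kalgebra K R phi \<longleftrightarrow> ring R \<and> phi \<in> ring_hom K R \<and>
     (\<forall>k\<in>carrier K. \<forall>x\<in>carrier R. phi k \<otimes>\<^bsub>R\<^esub> x = x \<otimes>\<^bsub>R\<^esub> phi k)"

definition subalgebra :: "('k,'a) ring_scheme \<Rightarrow> ('r,'b) ring_scheme \<Rightarrow> ('k \<Rightarrow> 'r) \<Rightarrow> 'r set \<Rightarrow> bool" where
  "subalgebra K R phi A \<longleftrightarrow> subring A R \<and> phi ` carrier K \<subseteq> A"

definition alg_iso :: "('k,'a) ring_scheme \<Rightarrow> ('r,'b) ring_scheme \<Rightarrow> ('k \<Rightarrow> 'r)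
     \<Rightarrow> ('s,'c) ring_scheme \<Rightarrow> ('k \<Rightarrow> 's) \<Rightarrow> ('r \<Rightarrow> 's) \<Rightarrow> bool" where
  "alg_iso K R psi1 R' psi2 f \<longleftrightarrow> f \<in> ring_iso R R' \<and> (\<forall>k\<in>carrier K. f (psi1 k) = psi2 k)"

definition derivation :: "('r,'b) ring_scheme \<Rightarrow> ('r \<Rightarrow> 'r) \<Rightarrow> bool" where
  "derivation R d \<longleftrightarrow> d \<in> carrier R \<rightarrow> carrier R \<and>
     (\<forall>x\<in>carrier R. \<forall>y\<in>carrier R. d (x \<oplus>\<^bsub>R\<^esub> y) = d x \<oplus>\<^bsub>R\<^esub> d y) \<and>
     (\<forall>x\<in>carrier R. \<forall>y\<in>carrier R. d (x \<otimes>\<^bsub>R\<^esub> y) = d x \<otimes>\<^bsub>R\<^esub> y \<oplus>\<^bsub>R\<^esub> x \<otimes>\<^bsub>R\<^esub> d y)"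

definition der_A :: "('r,'b) ring_scheme \<Rightarrow> 'r set \<Rightarrow> ('r \<Rightarrow> 'r) \<Rightarrow> bool" where
  "der_A R A d \<longleftrightarrow> derivation R d \<and>
     (\<forall>a\<in>A. \<forall>x\<in>carrier R. d (a \<otimes>\<^bsub>R\<^esub> x) = a \<otimes>\<^bsub>R\<^esub> d x)"

text \<open>N_D(R)_i = {b | D^(i+1) b = 0}, where D^(i+1) = all products d_1 ... d_(i+1), d_j in D.\<close>
definition nil_part :: "('r,'b) ring_scheme \<Rightarrow> ('r \<Rightarrow> 'r) set \<Rightarrow> nat \<Rightarrow> 'r set" where
  "nil_part R D i = {b \<in> carrier R. \<forall>ds. length ds = Suc i \<longrightarrow> set ds \<subseteq> D \<longrightarrow>
       foldr (\<lambda>d x. d x) ds b = \<zero>\<^bsub>R\<^esub>}"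

definition nil_all :: "('r,'b) ring_scheme \<Rightarrow> ('r \<Rightarrow> 'r) set \<Rightarrow> 'r set" where
  "nil_all R D = (\<Union>i. nil_part R D i)"

definition Nring :: "('r,'b) ring_scheme \<Rightarrow> ('r \<Rightarrow> 'r) set \<Rightarrow> ('r,'b) ring_scheme" where
  "Nring R D = R\<lparr>carrier := nil_all R D\<rparr>"

definition mult_set :: "('r,'b) ring_scheme \<Rightarrow> 'r set \<Rightarrow> bool" where
  "mult_set R S \<longleftrightarrow> S \<subseteq> carrier R \<and> \<one>\<^bsub>R\<^esub> \<in> S \<and> \<zero>\<^bsub>R\<^esub> \<notin> S \<and>
     (\<forall>s\<in>S. \<forall>t\<in>S. s \<otimes>\<^bsub>R\<^esub> t \<in> S)"

definition left_ore :: "('r,'b) ring_scheme \<Rightarrow> 'r set \<Rightarrow> bool" where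
  "left_ore R S \<longleftrightarrow> (\<forall>s\<in>S. \<forall>r\<in>carrier R. \<exists>t\<in>S. \<exists>r'\<in>carrier R. t \<otimes>\<^bsub>R\<^esub> r = r' \<otimes>\<^bsub>R\<^esub> s)"

definition left_denominator_set :: "('r,'b) ring_scheme \<Rightarrow> 'r set \<Rightarrow> bool" where
  "left_denominator_set R S \<longleftrightarrow> mult_set R S \<and> left_ore R S \<and>
     (\<forall>r\<in>carrier R. \<forall>s\<in>S. r \<otimes>\<^bsub>R\<^esub> s = \<zero>\<^bsub>R\<^esub> \<longrightarrow> (\<exists>t\<in>S. t \<otimes>\<^bsub>R\<^esub> r = \<zero>\<^bsub>R\<^esub>))"

definition ass :: "('r,'b) ring_scheme \<Rightarrow> 'r set \<Rightarrow> 'r set" where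
  "ass R S = {r \<in> carrier R. \<exists>s\<in>S. s \<otimes>\<^bsub>R\<^esub> r = \<zero>\<^bsub>R\<^esub>}"

text \<open>(Q, sigma) is a left ring of fractions S^{-1}R of R with respect to S
  (standard definition, e.g. Stenstroem): sigma : R -> Q ring homomorphism,
  sigma(S) consists of units, every element is sigma(s)^{-1} sigma(r), ker sigma = ass_R(S).\<close>
definition left_fractions :: "('r,'b) ring_scheme \<Rightarrow> 'r set \<Rightarrow> ('q,'c) ring_scheme \<Rightarrow> ('r \<Rightarrow> 'q) \<Rightarrow> bool" where
  "left_fractions R S Q sigma \<longleftrightarrow> ring Q \<and> sigma \<in> ring_hom R Q \<and>
     (\<forall>s\<in>S. sigma s \<in> Units Q) \<and>
     (\<forall>q\<in>carrier Q. \<exists>s\<in>S. \<exists>r\<in>carrier R. q = inv\<^bsub>Q\<^esub> (sigma s) \<otimes>\<^bsub>Q\<^esub> sigma r) \<and>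
     (\<forall>r\<in>carrier R. sigma r = \<zero>\<^bsub>Q\<^esub> \<longleftrightarrow> r \<in> ass R S)"

text \<open>Extension of a derivation d of R to S^{-1}R: d(s^{-1} r) = s^{-1} d(r).\<close>
definition loc_der :: "('r,'b) ring_scheme \<Rightarrow> 'r set \<Rightarrow> ('q,'c) ring_scheme \<Rightarrow> ('r \<Rightarrow> 'q)
    \<Rightarrow> ('r \<Rightarrow> 'r) \<Rightarrow> 'q \<Rightarrow> 'q" where
  "loc_der R S Q sigma d q = (SOME y. \<exists>s\<in>S. \<exists>r\<in>carrier R.
      q = inv\<^bsub>Q\<^esub> (sigma s) \<otimes>\<^bsub>Q\<^esub> sigma r \<and> y = inv\<^bsub>Q\<^esub> (sigma s) \<otimes>\<^bsub>Q\<^esub> sigma (d r))"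

definition loc_ders :: "('r,'b) ring_scheme \<Rightarrow> 'r set \<Rightarrow> ('q,'c) ring_scheme \<Rightarrow> ('r \<Rightarrow> 'q)
    \<Rightarrow> ('r \<Rightarrow> 'r) set \<Rightarrow> ('q \<Rightarrow> 'q) set" where
  "loc_ders R S Q sigma D = (\<lambda>d. loc_der R S Q sigma d) ` D"

definition loc_sub :: "'r set \<Rightarrow> ('q,'c) ring_scheme \<Rightarrow> ('r \<Rightarrow> 'q) \<Rightarrow> 'r set \<Rightarrow> 'q set" where
  "loc_sub S Q sigma M = {inv\<^bsub>Q\<^esub> (sigma s) \<otimes>\<^bsub>Q\<^esub> sigma m | s m. s \<in> S \<and> m \<in> M}"

definition quot_der :: "('r,'b) ring_scheme \<Rightarrow> 'r set \<Rightarrow> ('r \<Rightarrow> 'r) \<Rightarrow> 'r set \<Rightarrow> 'r set" where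
  "quot_der R I d C = a_r_coset R I (d (SOME e. e \<in> C))"

end

theory Submission
  imports Defs
begin

lemma list_lift: "set ds' \<subseteq> f ` A \<Longrightarrow> \<exists>ds. set ds \<subseteq> A \<and> ds' = map f ds"
proof (induction ds')
  case Nil then show ?case by auto
next
  case (Cons a ds')
  then obtain ds where "set ds \<subseteq> A" "ds' = map f ds" by auto
  moreover obtain x where "x \<in> A" "a = f x" using Cons.prems by auto
  ultimately show ?case by (intro exI[of _ "x # ds"]) auto
qed

primrec Mset :: "('r,'b) ring_scheme \<Rightarrow> ('r \<Rightarrow> 'r) set \<Rightarrow> nat \<Rightarrow> 'r set" where
  "Mset R D 0 = {\<zero>\<^bsub>R\<^esub>}"
| "Mset R D (Suc n) = {x \<in> carrier R. \<forall>d\<in>D. d x \<in> Mset R D n}"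

locale dring = ring R for R (structure) +
  fixes D assumes ders: "\<And>d. d \<in> D \<Longrightarrow> derivation R d"
begin

lemma d_closed: "d \<in> D \<Longrightarrow> x \<in> carrier R \<Longrightarrow> d x \<in> carrier R"
  using ders unfolding derivation_def by blast

lemma d_add: "d \<in> D \<Longrightarrow> x \<in> carrier R \<Longrightarrow> y \<in> carrier R \<Longrightarrow> d (x \<oplus> y) = d x \<oplus> d y"
  using ders unfolding derivation_def by blast

lemma d_mult: "d \<in> D \<Longrightarrow> x \<in> carrier R \<Longrightarrow> y \<in> carrier R \<Longrightarrow> d (x \<otimes> y) = d x \<otimes> y \<oplus> x \<otimes> d y"
  using ders unfolding derivation_def by blast

lemma d_zero: assumes "d \<in> D" shows "d \<zero> = \<zero>"
proof -
  have "d \<zero> \<oplus> d \<zero> = d \<zero> \<oplus> \<zero>" using d_add[OF assms, of \<zero> \<zero>] d_closed[OF assms, of \<zero>] by simp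
  then show ?thesis using d_closed[OF assms, of \<zero>] by (metis add.l_cancel zero_closed)
qed

lemma d_one: assumes "d \<in> D" shows "d \<one> = \<zero>"
proof -
  have "d \<one> \<oplus> d \<one> = d \<one> \<oplus> \<zero>" using d_mult[OF assms, of \<one> \<one>] d_closed[OF assms, of \<one>] by simp
  then show ?thesis using add.l_cancel[of "d \<one>" "d \<one>" "\<zero>"] d_closed[OF assms, of \<one>] by simp
qed

lemma d_inv: assumes "d \<in> D" "x \<in> carrier R" shows "d (\<ominus> x) = \<ominus> d x"
proof -
  have "d x \<oplus> d (\<ominus> x) = \<zero>" using d_add[OF assms(1) assms(2), of "\<ominus> x"] assms d_zero[OF assms(1)]
    by (simp add: r_neg)
  then show ?thesis using assms d_closed
    by (metis a_inv_closed add.inv_closed add.l_cancel r_neg)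
qed

lemma foldr_closed: "set ds \<subseteq> D \<Longrightarrow> x \<in> carrier R \<Longrightarrow> foldr (\<lambda>d x. d x) ds x \<in> carrier R"
  by (induction ds) (auto intro: d_closed)

lemma M_carr: "Mset R D n \<subseteq> carrier R"
  by (cases n) auto

lemma zero_M: "\<zero> \<in> Mset R D n"
  by (induction n) (auto simp: d_zero)

lemma M_mono_Suc: "Mset R D n \<subseteq> Mset R D (Suc n)"
proof (induction n)
  case 0 then show ?case by (auto simp: d_zero)
next
  case (Suc n) then show ?case using M_carr by auto
qed

lemma M_mono: "m \<le> n \<Longrightarrow> Mset R D m \<subseteq> Mset R D n"
  by (induction n rule: dec_induct) (use M_mono_Suc in blast)+

lemma M_add: "x \<in> Mset R D n \<Longrightarrow> y \<in> Mset R D n \<Longrightarrow> x \<oplus> y \<in> Mset R D n"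
proof (induction n arbitrary: x y)
  case 0 then show ?case by simp
next
  case (Suc n) then show ?case by (auto simp: d_add)
qed

lemma M_inv: "x \<in> Mset R D n \<Longrightarrow> \<ominus> x \<in> Mset R D n"
proof (induction n arbitrary: x)
  case 0 then show ?case by simp
next
  case (Suc n) then show ?case by (auto simp: d_inv)
qed

lemma M_mult: "x \<in> Mset R D a \<Longrightarrow> y \<in> Mset R D b \<Longrightarrow> x \<otimes> y \<in> Mset R D (a + b)"
proof (induction "a + b" arbitrary: a b x y rule: less_induct)
  case less
  show ?case
  proof (cases "a = 0 \<or> b = 0")
    case True
    have "x \<in> carrier R" "y \<in> carrier R" using less.prems M_carr by auto
    then show ?thesis using True less.prems zero_M by auto
  next
    case False
    then obtain a' b' where ab: "a = Suc a'" "b = Suc b'" by (meson not0_implies_Suc)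
    have xc: "x \<in> carrier R" and yc: "y \<in> carrier R" using less.prems ab by auto
    have "d (x \<otimes> y) \<in> Mset R D (a' + b)" if d: "d \<in> D" for d
    proof -
      have 1: "d x \<otimes> y \<in> Mset R D (a' + b)"
        using less.hyps[of a' b "d x" y] less.prems ab d by auto
      have 2: "x \<otimes> d y \<in> Mset R D (a + b')"
        using less.hyps[of a b' x "d y"] less.prems ab d by auto
      show ?thesis using M_add[OF 1] 2 ab d_mult[OF d xc yc] by simp
    qed
    then show ?thesis using ab xc yc by simp
  qed
qed

lemma one_M: "\<one> \<in> Mset R D 1"
  by (auto simp: d_one)

lemma nil_part_0: "nil_part R D 0 = {x \<in> carrier R. \<forall>d\<in>D. d x = \<zero>}"
proof -
  have "(\<forall>ds. length ds = Suc 0 \<longrightarrow> set ds \<subseteq> D \<longrightarrow> foldr (\<lambda>d x. d x) ds x = \<zero>) \<longleftrightarrow> (\<forall>d\<in>D. d x = \<zero>)" for x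
  proof
    assume H: "\<forall>ds. length ds = Suc 0 \<longrightarrow> set ds \<subseteq> D \<longrightarrow> foldr (\<lambda>d x. d x) ds x = \<zero>"
    show "\<forall>d\<in>D. d x = \<zero>"
    proof
      fix d assume "d \<in> D" then show "d x = \<zero>" using H[rule_format, of "[d]"] by simp
    qed
  next
    assume "\<forall>d\<in>D. d x = \<zero>"
    then show "\<forall>ds. length ds = Suc 0 \<longrightarrow> set ds \<subseteq> D \<longrightarrow> foldr (\<lambda>d x. d x) ds x = \<zero>"
      by (auto simp: length_Suc_conv)
  qed
  then show ?thesis unfolding nil_part_def by auto
qed

lemma nil_part_Suc: "nil_part R D (Suc i) = {x \<in> carrier R. \<forall>d\<in>D. d x \<in> nil_part R D i}"
proof -
  have "(\<forall>ds. length ds = Suc (Suc i) \<longrightarrow> set ds \<subseteq> D \<longrightarrow> foldr (\<lambda>d x. d x) ds x = \<zero>) \<longleftrightarrow>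
        (\<forall>d\<in>D. \<forall>ds. length ds = Suc i \<longrightarrow> set ds \<subseteq> D \<longrightarrow> foldr (\<lambda>d x. d x) ds (d x) = \<zero>)" for x
  proof
    assume H: "\<forall>ds. length ds = Suc (Suc i) \<longrightarrow> set ds \<subseteq> D \<longrightarrow> foldr (\<lambda>d x. d x) ds x = \<zero>"
    show "\<forall>d\<in>D. \<forall>ds. length ds = Suc i \<longrightarrow> set ds \<subseteq> D \<longrightarrow> foldr (\<lambda>d x. d x) ds (d x) = \<zero>"
    proof (intro ballI allI impI)
      fix d ds assume "d \<in> D" "length ds = Suc i" "set ds \<subseteq> D"
      then show "foldr (\<lambda>d x. d x) ds (d x) = \<zero>" using H[rule_format, of "ds @ [d]"] by simp
    qed
  next
    assume H: "\<forall>d\<in>D. \<forall>ds. length ds = Suc i \<longrightarrow> set ds \<subseteq> D \<longrightarrow> foldr (\<lambda>d x. d x) ds (d x) = \<zero>"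
    show "\<forall>ds. length ds = Suc (Suc i) \<longrightarrow> set ds \<subseteq> D \<longrightarrow> foldr (\<lambda>d x. d x) ds x = \<zero>"
    proof (intro allI impI)
      fix ds :: "('a \<Rightarrow> 'a) list" assume l: "length ds = Suc (Suc i)" and s: "set ds \<subseteq> D"
      then obtain ds' d where "ds = ds' @ [d]" by (metis length_Suc_conv_rev)
      then show "foldr (\<lambda>d x. d x) ds x = \<zero>" using H l s by auto
    qed
  qed
  then show ?thesis unfolding nil_part_def using d_closed by auto
qed

lemma nil_part_M: "nil_part R D i = Mset R D (Suc i)"
proof (induction i)
  case 0 then show ?case by (simp add: nil_part_0)
next
  case (Suc i) then show ?case by (simp add: nil_part_Suc)
qed

lemma nil_all_M: "nil_all R D = (\<Union>n. Mset R D n)"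
proof -
  have "Mset R D n \<subseteq> nil_all R D" for n
    using M_mono_Suc[of n] unfolding nil_all_def nil_part_M by blast
  then show ?thesis unfolding nil_all_def nil_part_M by blast
qed

lemma nil_all_subring: "subring (nil_all R D) R"
proof (rule subringI)
  show "nil_all R D \<subseteq> carrier R" unfolding nil_all_M using M_carr by blast
  show "\<one> \<in> nil_all R D" unfolding nil_all_M using one_M by blast
  show "\<ominus> h \<in> nil_all R D" if "h \<in> nil_all R D" for h
    using that M_inv unfolding nil_all_M by blast
  show "h1 \<otimes> h2 \<in> nil_all R D" if "h1 \<in> nil_all R D" "h2 \<in> nil_all R D" for h1 h2
    using that M_mult unfolding nil_all_M by blast
  show "h1 \<oplus> h2 \<in> nil_all R D" if hh: "h1 \<in> nil_all R D" "h2 \<in> nil_all R D" for h1 h2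
  proof -
    obtain a b where "h1 \<in> Mset R D a" "h2 \<in> Mset R D b" using hh unfolding nil_all_M by blast
    then have "h1 \<in> Mset R D (max a b)" "h2 \<in> Mset R D (max a b)"
      using M_mono[of a "max a b"] M_mono[of b "max a b"] by auto
    then show ?thesis using M_add unfolding nil_all_M by blast
  qed
qed

lemma Nring_ring: "ring (Nring R D)"
  unfolding Nring_def by (rule subring_is_ring[OF nil_all_subring])

lemma nil_part_carr: "nil_part R D i \<subseteq> carrier R"
  unfolding nil_part_def by auto

lemma nil_part_sub_all: "nil_part R D i \<subseteq> nil_all R D"
  unfolding nil_all_def by auto

end

context ring
begin

lemma U_inv_mult: assumes "x \<in> Units R" "y \<in> Units R" shows "inv (x \<otimes> y) = inv y \<otimes> inv x"
proof -
  have c: "x \<in> carrier R" "y \<in> carrier R" "inv x \<in> carrier R" "inv y \<in> carrier R" using assms by auto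
  have "(x \<otimes> y) \<otimes> (inv y \<otimes> inv x) = \<one>"
    using c assms by (simp add: m_assoc[symmetric]) (simp add: m_assoc)
  moreover have "(inv y \<otimes> inv x) \<otimes> (x \<otimes> y) = \<one>"
    using c assms by (simp add: m_assoc[symmetric]) (simp add: m_assoc)
  ultimately show ?thesis using c by (intro inv_unique'[symmetric]) auto
qed

lemma GL1:
  assumes U: "x \<in> Units R" "y \<in> Units R" "m \<in> Units R" and C: "a \<in> carrier R" "b \<in> carrier R" "n \<in> carrier R"
    and e: "m \<otimes> y = n \<otimes> x"
  shows "(inv x \<otimes> a = inv y \<otimes> b) \<longleftrightarrow> (n \<otimes> a = m \<otimes> b)"
proof -
  have c: "x \<in> carrier R" "y \<in> carrier R" "m \<in> carrier R" "inv x \<in> carrier R" "inv y \<in> carrier R" "inv m \<in> carrier R"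
    using U by auto
  have n: "n = m \<otimes> y \<otimes> inv x"
    using e c C U by (simp add: m_assoc)
  show ?thesis
  proof
    assume h: "inv x \<otimes> a = inv y \<otimes> b"
    have "n \<otimes> a = m \<otimes> y \<otimes> (inv x \<otimes> a)" using n c C by (simp add: m_assoc)
    also have "\<dots> = m \<otimes> y \<otimes> (inv y \<otimes> b)" using h by simp
    also have "\<dots> = m \<otimes> b" using c C U by (simp add: m_assoc[symmetric]) (simp add: m_assoc)
    finally show "n \<otimes> a = m \<otimes> b" .
  next
    assume h: "n \<otimes> a = m \<otimes> b"
    have "m \<otimes> (y \<otimes> (inv x \<otimes> a)) = m \<otimes> b" using h n c C by (simp add: m_assoc)
    then have h2: "y \<otimes> (inv x \<otimes> a) = b" using c C U by (simp add: Units_l_cancel)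
    have "inv y \<otimes> b = inv y \<otimes> (y \<otimes> (inv x \<otimes> a))" using h2 by simp
    also have "\<dots> = inv x \<otimes> a" using c C U by (simp add: m_assoc[symmetric])
    finally show "inv x \<otimes> a = inv y \<otimes> b" by simp
  qed
qed

lemma GL_mult:
  assumes U: "x \<in> Units R" "y \<in> Units R" "m \<in> Units R" and C: "A \<in> carrier R" "B \<in> carrier R" "Cc \<in> carrier R"
    and e: "m \<otimes> A = Cc \<otimes> y"
  shows "(inv x \<otimes> A) \<otimes> (inv y \<otimes> B) = inv (m \<otimes> x) \<otimes> (Cc \<otimes> B)"
proof -
  have c: "x \<in> carrier R" "y \<in> carrier R" "m \<in> carrier R" "inv x \<in> carrier R" "inv y \<in> carrier R" "inv m \<in> carrier R"
    using U by auto
  have k: "A \<otimes> inv y = inv m \<otimes> Cc"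
  proof -
    have "inv m \<otimes> Cc = inv m \<otimes> (Cc \<otimes> y) \<otimes> inv y" using c C U by (simp add: m_assoc)
    also have "\<dots> = inv m \<otimes> (m \<otimes> A) \<otimes> inv y" using e by simp
    also have "\<dots> = A \<otimes> inv y" using c C U by (simp add: m_assoc[symmetric])
    finally show ?thesis by simp
  qed
  have "(inv x \<otimes> A) \<otimes> (inv y \<otimes> B) = inv x \<otimes> (A \<otimes> inv y) \<otimes> B" using c C by (simp add: m_assoc)
  also have "\<dots> = inv x \<otimes> inv m \<otimes> (Cc \<otimes> B)" using k c C by (simp add: m_assoc)
  also have "\<dots> = inv (m \<otimes> x) \<otimes> (Cc \<otimes> B)" using U_inv_mult[of m x] U by simp
  finally show ?thesis .
qed

lemma GL_add:
  assumes U: "x \<in> Units R" "y \<in> Units R" "m \<in> Units R" and C: "A \<in> carrier R" "B \<in> carrier R" "Cc \<in> carrier R"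
    and e: "m \<otimes> y = Cc \<otimes> x"
  shows "inv x \<otimes> A \<oplus> inv y \<otimes> B = inv (m \<otimes> y) \<otimes> (Cc \<otimes> A \<oplus> m \<otimes> B)"
proof -
  have c: "x \<in> carrier R" "y \<in> carrier R" "m \<in> carrier R" "inv x \<in> carrier R" "inv y \<in> carrier R" "inv m \<in> carrier R"
    using U by auto
  have k: "inv m \<otimes> Cc = y \<otimes> inv x"
  proof -
    have "y \<otimes> inv x = inv m \<otimes> (m \<otimes> y) \<otimes> inv x" using c C U by (simp add: m_assoc[symmetric])
    also have "\<dots> = inv m \<otimes> (Cc \<otimes> x) \<otimes> inv x" using e by simp
    also have "\<dots> = inv m \<otimes> Cc" using c C U by (simp add: m_assoc)
    finally show ?thesis by simp
  qed
  have "inv (m \<otimes> y) \<otimes> (Cc \<otimes> A \<oplus> m \<otimes> B) = inv y \<otimes> inv m \<otimes> (Cc \<otimes> A) \<oplus> inv y \<otimes> inv m \<otimes> (m \<otimes> B)"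
    using U_inv_mult[of m y] U c C by (simp add: r_distr)
  also have "inv y \<otimes> inv m \<otimes> (Cc \<otimes> A) = inv y \<otimes> (inv m \<otimes> Cc) \<otimes> A" using c C by (simp add: m_assoc)
  also have "\<dots> = inv x \<otimes> A" using k c C U by (simp add: m_assoc[symmetric])
  also have "inv y \<otimes> inv m \<otimes> (m \<otimes> B) = inv y \<otimes> B" using c C U by (simp add: m_assoc[symmetric]) (simp add: m_assoc)
  finally show ?thesis by simp
qed

end

locale lds = ring R for R (structure) +
  fixes S assumes lds: "left_denominator_set R S"
begin

lemma S_carr: "S \<subseteq> carrier R" using lds unfolding left_denominator_set_def mult_set_def by blast
lemma S_carr': "s \<in> S \<Longrightarrow> s \<in> carrier R" using S_carr by blast
lemma one_S: "\<one> \<in> S" using lds unfolding left_denominator_set_def mult_set_def by blast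
lemma zero_notS: "\<zero> \<notin> S" using lds unfolding left_denominator_set_def mult_set_def by blast
lemma S_mult: "s \<in> S \<Longrightarrow> t \<in> S \<Longrightarrow> s \<otimes> t \<in> S" using lds unfolding left_denominator_set_def mult_set_def by blast
lemma ore: "s \<in> S \<Longrightarrow> r \<in> carrier R \<Longrightarrow> \<exists>t\<in>S. \<exists>r'\<in>carrier R. t \<otimes> r = r' \<otimes> s"
  using lds unfolding left_denominator_set_def left_ore_def by blast
lemma canc: "r \<in> carrier R \<Longrightarrow> s \<in> S \<Longrightarrow> r \<otimes> s = \<zero> \<Longrightarrow> \<exists>t\<in>S. t \<otimes> r = \<zero>"
  using lds unfolding left_denominator_set_def by blast

lemma ass_lmult: assumes "x \<in> ass R S" "y \<in> carrier R" shows "y \<otimes> x \<in> ass R S"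
proof -
  obtain s where s: "s \<in> S" "s \<otimes> x = \<zero>" "x \<in> carrier R" using assms unfolding ass_def by blast
  obtain t r' where tr: "t \<in> S" "r' \<in> carrier R" "t \<otimes> y = r' \<otimes> s" using ore[OF s(1) assms(2)] by blast
  have "t \<otimes> (y \<otimes> x) = \<zero>" using tr s assms S_carr'[of s] S_carr'[of t]
    by (simp add: m_assoc[symmetric]) (simp add: m_assoc)
  then show ?thesis using tr s assms unfolding ass_def by auto
qed

lemma killer:
  assumes "F \<subseteq> ass R S" "finite F \<or> F \<subseteq> {\<zero>}"
  shows "\<exists>u\<in>S. \<forall>x\<in>F. u \<otimes> x = \<zero>"
  using assms(2)
proof
  assume "F \<subseteq> {\<zero>}" then show ?thesis using one_S by (intro bexI[of _ \<one>]) auto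
next
  assume "finite F"
  then show ?thesis using assms(1)
  proof (induction F rule: finite_induct)
    case empty then show ?case using one_S by blast
  next
    case (insert x F)
    then obtain u where u: "u \<in> S" "\<forall>y\<in>F. u \<otimes> y = \<zero>" by auto
    have x: "x \<in> ass R S" "x \<in> carrier R" using insert.prems unfolding ass_def by auto
    have "u \<otimes> x \<in> ass R S" using ass_lmult[OF x(1)] u S_carr' by blast
    then obtain v where v: "v \<in> S" "v \<otimes> (u \<otimes> x) = \<zero>" unfolding ass_def by blast
    have "\<forall>y\<in>insert x F. (v \<otimes> u) \<otimes> y = \<zero>"
    proof
      fix y assume "y \<in> insert x F"
      then have yc: "y \<in> carrier R" using insert.prems unfolding ass_def by auto
      show "(v \<otimes> u) \<otimes> y = \<zero>"
        using \<open>y \<in> insert x F\<close> u v yc S_carr' by (auto simp: m_assoc)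
    qed
    then show ?case using S_mult[OF v(1) u(1)] by blast
  qed
qed

end

definition fr :: "('q,'c) ring_scheme \<Rightarrow> ('r \<Rightarrow> 'q) \<Rightarrow> 'r \<Rightarrow> 'r \<Rightarrow> 'q" where
  "fr Q \<sigma> s r = inv\<^bsub>Q\<^esub> (\<sigma> s) \<otimes>\<^bsub>Q\<^esub> \<sigma> r"

definition extm :: "('r,'b) ring_scheme \<Rightarrow> 'r set \<Rightarrow> ('q,'c) ring_scheme \<Rightarrow> ('r \<Rightarrow> 'q)
   \<Rightarrow> ('t,'d) ring_scheme \<Rightarrow> ('r \<Rightarrow> 't) \<Rightarrow> 'q \<Rightarrow> 't" where
  "extm R S Q \<sigma> T \<phi> q = (SOME y. \<exists>s\<in>S. \<exists>r\<in>carrier R. q = fr Q \<sigma> s r \<and> y = fr T \<phi> s r)"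

locale lfr = lds R S for R (structure) and S +
  fixes Q :: "('q,'c) ring_scheme" and \<sigma> assumes lf: "left_fractions R S Q \<sigma>"
begin

lemma Qring: "ring Q" using lf unfolding left_fractions_def by blast
lemma sig_hom: "\<sigma> \<in> ring_hom R Q" using lf unfolding left_fractions_def by blast
lemma sig_units: "s \<in> S \<Longrightarrow> \<sigma> s \<in> Units Q" using lf unfolding left_fractions_def by blast
lemma Q_rep: "q \<in> carrier Q \<Longrightarrow> \<exists>s\<in>S. \<exists>r\<in>carrier R. q = fr Q \<sigma> s r"
  using lf unfolding left_fractions_def fr_def by blast
lemma sig_ker: "r \<in> carrier R \<Longrightarrow> \<sigma> r = \<zero>\<^bsub>Q\<^esub> \<longleftrightarrow> r \<in> ass R S"
  using lf unfolding left_fractions_def by blast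

sublocale Q: ring Q by (rule Qring)
sublocale sh: ring_hom_ring R Q \<sigma> by (intro ring_hom_ringI2 ring_axioms Qring sig_hom)

lemma sig_eq: assumes "x \<in> carrier R" "y \<in> carrier R" shows "\<sigma> x = \<sigma> y \<longleftrightarrow> (\<exists>w\<in>S. w \<otimes> x = w \<otimes> y)"
proof -
  have "\<sigma> x = \<sigma> y \<longleftrightarrow> \<sigma> (x \<ominus> y) = \<zero>\<^bsub>Q\<^esub>"
    using assms by (simp add: minus_eq Q.minus_eq[symmetric])
  also have "\<dots> \<longleftrightarrow> x \<ominus> y \<in> ass R S" using sig_ker assms by simp
  also have "\<dots> \<longleftrightarrow> (\<exists>w\<in>S. w \<otimes> (x \<ominus> y) = \<zero>)" using assms unfolding ass_def by auto
  also have "\<dots> \<longleftrightarrow> (\<exists>w\<in>S. w \<otimes> x = w \<otimes> y)"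
  proof -
    have "w \<otimes> (x \<ominus> y) = w \<otimes> x \<ominus> w \<otimes> y" if "w \<in> S" for w
      using that assms S_carr' by (simp add: minus_eq r_distr r_minus)
    then show ?thesis using assms S_carr' by auto
  qed
  finally show ?thesis .
qed

lemma fr_closed: "s \<in> S \<Longrightarrow> r \<in> carrier R \<Longrightarrow> fr Q \<sigma> s r \<in> carrier Q"
  unfolding fr_def using sig_units by auto

lemma fr_eq:
  assumes "s \<in> S" "t \<in> S" "u \<in> S" "r \<in> carrier R" "r' \<in> carrier R" "b \<in> carrier R" "u \<otimes> t = b \<otimes> s"
  shows "fr Q \<sigma> s r = fr Q \<sigma> t r' \<longleftrightarrow> (\<exists>w\<in>S. w \<otimes> (b \<otimes> r) = w \<otimes> (u \<otimes> r'))"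
proof -
  have "\<sigma> u \<otimes>\<^bsub>Q\<^esub> \<sigma> t = \<sigma> b \<otimes>\<^bsub>Q\<^esub> \<sigma> s" using assms S_carr' by (metis sh.hom_mult)
  then have "fr Q \<sigma> s r = fr Q \<sigma> t r' \<longleftrightarrow> \<sigma> b \<otimes>\<^bsub>Q\<^esub> \<sigma> r = \<sigma> u \<otimes>\<^bsub>Q\<^esub> \<sigma> r'"
    unfolding fr_def using assms sig_units S_carr' by (intro Q.GL1) auto
  also have "\<dots> \<longleftrightarrow> \<sigma> (b \<otimes> r) = \<sigma> (u \<otimes> r')" using assms S_carr' by simp
  also have "\<dots> \<longleftrightarrow> (\<exists>w\<in>S. w \<otimes> (b \<otimes> r) = w \<otimes> (u \<otimes> r'))" using assms S_carr' by (intro sig_eq) auto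
  finally show ?thesis .
qed

lemma fr_one: "fr Q \<sigma> \<one> r = \<sigma> r" if "r \<in> carrier R"
  unfolding fr_def using that by simp

end

context lfr
begin

context
  fixes T :: "('t,'d) ring_scheme" and \<phi>
  assumes T: "ring T" and phom: "\<phi> \<in> ring_hom R T" and pU: "\<And>s. s \<in> S \<Longrightarrow> \<phi> s \<in> Units T"
begin

interpretation T: ring T by (rule T)
interpretation ph: ring_hom_ring R T \<phi> by (intro ring_hom_ringI2 ring_axioms T phom)

lemma frT_closed: "s \<in> S \<Longrightarrow> r \<in> carrier R \<Longrightarrow> fr T \<phi> s r \<in> carrier T"
  unfolding fr_def using pU by auto

lemma frT_eq:
  assumes "s \<in> S" "t \<in> S" "u \<in> S" "r \<in> carrier R" "r' \<in> carrier R" "b \<in> carrier R" "u \<otimes> t = b \<otimes> s"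
  shows "fr T \<phi> s r = fr T \<phi> t r' \<longleftrightarrow> \<phi> (b \<otimes> r) = \<phi> (u \<otimes> r')"
proof -
  have "\<phi> u \<otimes>\<^bsub>T\<^esub> \<phi> t = \<phi> b \<otimes>\<^bsub>T\<^esub> \<phi> s" using assms S_carr' by (metis ph.hom_mult)
  then have "fr T \<phi> s r = fr T \<phi> t r' \<longleftrightarrow> \<phi> b \<otimes>\<^bsub>T\<^esub> \<phi> r = \<phi> u \<otimes>\<^bsub>T\<^esub> \<phi> r'"
    unfolding fr_def using assms pU S_carr' by (intro T.GL1) auto
  also have "\<dots> \<longleftrightarrow> \<phi> (b \<otimes> r) = \<phi> (u \<otimes> r')" using assms S_carr' by simp
  finally show ?thesis .
qed

lemma tr_wd:
  assumes "s \<in> S" "t \<in> S" "r \<in> carrier R" "r' \<in> carrier R" "fr Q \<sigma> s r = fr Q \<sigma> t r'"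
  shows "fr T \<phi> s r = fr T \<phi> t r'"
proof -
  obtain u b where ub: "u \<in> S" "b \<in> carrier R" "u \<otimes> t = b \<otimes> s" using ore[OF assms(1) S_carr'[OF assms(2)]] by blast
  obtain w where w: "w \<in> S" "w \<otimes> (b \<otimes> r) = w \<otimes> (u \<otimes> r')" using fr_eq[OF assms(1,2) ub(1) assms(3,4) ub(2,3)] assms(5) by blast
  have "\<phi> w \<otimes>\<^bsub>T\<^esub> \<phi> (b \<otimes> r) = \<phi> w \<otimes>\<^bsub>T\<^esub> \<phi> (u \<otimes> r')"
    using w ub assms S_carr' by (metis m_closed ph.hom_mult)
  then have "\<phi> (b \<otimes> r) = \<phi> (u \<otimes> r')" using pU[OF w(1)] ub assms S_carr' by (simp del: ph.hom_mult)
  then show ?thesis using frT_eq[OF assms(1,2) ub(1) assms(3,4) ub(2,3)] by simp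
qed

lemma tr_frac: assumes "s \<in> S" "r \<in> carrier R" shows "extm R S Q \<sigma> T \<phi> (fr Q \<sigma> s r) = fr T \<phi> s r"
proof -
  let ?P = "\<lambda>y. \<exists>s'\<in>S. \<exists>r'\<in>carrier R. fr Q \<sigma> s r = fr Q \<sigma> s' r' \<and> y = fr T \<phi> s' r'"
  have "?P (fr T \<phi> s r)" using assms by blast
  then have "?P (SOME y. ?P y)" by (rule someI)
  then obtain s' r' where "s' \<in> S" "r' \<in> carrier R" "fr Q \<sigma> s r = fr Q \<sigma> s' r'" "(SOME y. ?P y) = fr T \<phi> s' r'" by blast
  then show ?thesis unfolding extm_def using tr_wd[OF assms(1) _ assms(2)] by simp
qed

lemma tr_hom: "extm R S Q \<sigma> T \<phi> \<in> ring_hom Q T"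
proof (rule ring_hom_memI)
  fix q assume "q \<in> carrier Q"
  then obtain s r where "s \<in> S" "r \<in> carrier R" "q = fr Q \<sigma> s r" using Q_rep by blast
  then show "extm R S Q \<sigma> T \<phi> q \<in> carrier T" using tr_frac frT_closed by simp
next
  fix q1 q2 assume "q1 \<in> carrier Q" "q2 \<in> carrier Q"
  then obtain s a t b where sa: "s \<in> S" "a \<in> carrier R" "q1 = fr Q \<sigma> s a" and tb: "t \<in> S" "b \<in> carrier R" "q2 = fr Q \<sigma> t b"
    using Q_rep by meson
  obtain u c where uc: "u \<in> S" "c \<in> carrier R" "u \<otimes> a = c \<otimes> t" using ore[OF tb(1) sa(2)] by blast
  have h1: "\<sigma> u \<otimes>\<^bsub>Q\<^esub> \<sigma> a = \<sigma> c \<otimes>\<^bsub>Q\<^esub> \<sigma> t" using uc sa tb S_carr' by (metis sh.hom_mult)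
  have e: "q1 \<otimes>\<^bsub>Q\<^esub> q2 = fr Q \<sigma> (u \<otimes> s) (c \<otimes> b)"
    unfolding sa tb fr_def using sa tb uc S_carr' sig_units Q.GL_mult[OF sig_units[of s] sig_units[of t] sig_units[of u] _ _ _ h1]
    by simp
  have h2: "\<phi> u \<otimes>\<^bsub>T\<^esub> \<phi> a = \<phi> c \<otimes>\<^bsub>T\<^esub> \<phi> t" using uc sa tb S_carr' by (metis ph.hom_mult)
  have eT: "fr T \<phi> s a \<otimes>\<^bsub>T\<^esub> fr T \<phi> t b = fr T \<phi> (u \<otimes> s) (c \<otimes> b)"
    unfolding fr_def using sa tb uc S_carr' pU T.GL_mult[OF pU[of s] pU[of t] pU[of u] _ _ _ h2]
    by simp
  show "extm R S Q \<sigma> T \<phi> (q1 \<otimes>\<^bsub>Q\<^esub> q2) = extm R S Q \<sigma> T \<phi> q1 \<otimes>\<^bsub>T\<^esub> extm R S Q \<sigma> T \<phi> q2"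
    using e eT sa tb uc tr_frac S_mult by simp
next
  fix q1 q2 assume "q1 \<in> carrier Q" "q2 \<in> carrier Q"
  then obtain s a t b where sa: "s \<in> S" "a \<in> carrier R" "q1 = fr Q \<sigma> s a" and tb: "t \<in> S" "b \<in> carrier R" "q2 = fr Q \<sigma> t b"
    using Q_rep by meson
  obtain u c where uc: "u \<in> S" "c \<in> carrier R" "u \<otimes> t = c \<otimes> s" using ore[OF sa(1) S_carr'[OF tb(1)]] by blast
  have h1: "\<sigma> u \<otimes>\<^bsub>Q\<^esub> \<sigma> t = \<sigma> c \<otimes>\<^bsub>Q\<^esub> \<sigma> s" using uc sa tb S_carr' by (metis sh.hom_mult)
  have e: "q1 \<oplus>\<^bsub>Q\<^esub> q2 = fr Q \<sigma> (u \<otimes> t) (c \<otimes> a \<oplus> u \<otimes> b)"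
    unfolding sa tb fr_def using sa tb uc(1,2) S_carr' sig_units Q.GL_add[OF sig_units[of s] sig_units[of t] sig_units[of u] _ _ _ h1]
    by simp
  have h2: "\<phi> u \<otimes>\<^bsub>T\<^esub> \<phi> t = \<phi> c \<otimes>\<^bsub>T\<^esub> \<phi> s" using uc sa tb S_carr' by (metis ph.hom_mult)
  have eT: "fr T \<phi> s a \<oplus>\<^bsub>T\<^esub> fr T \<phi> t b = fr T \<phi> (u \<otimes> t) (c \<otimes> a \<oplus> u \<otimes> b)"
    unfolding fr_def using sa tb uc(1,2) S_carr' pU T.GL_add[OF pU[of s] pU[of t] pU[of u] _ _ _ h2]
    by simp
  show "extm R S Q \<sigma> T \<phi> (q1 \<oplus>\<^bsub>Q\<^esub> q2) = extm R S Q \<sigma> T \<phi> q1 \<oplus>\<^bsub>T\<^esub> extm R S Q \<sigma> T \<phi> q2"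
    using e eT sa tb uc(1,2) tr_frac[of "u \<otimes> t" "c \<otimes> a \<oplus> u \<otimes> b"] tr_frac[of s a] tr_frac[of t b] S_mult S_carr' by simp
next
  have "\<one>\<^bsub>Q\<^esub> = fr Q \<sigma> \<one> \<one>" unfolding fr_def by simp
  moreover have "fr T \<phi> \<one> \<one> = \<one>\<^bsub>T\<^esub>" unfolding fr_def by simp
  ultimately show "extm R S Q \<sigma> T \<phi> \<one>\<^bsub>Q\<^esub> = \<one>\<^bsub>T\<^esub>" using tr_frac one_S by simp
qed

lemma tr_inj:
  assumes refl: "\<And>x y. x \<in> carrier R \<Longrightarrow> y \<in> carrier R \<Longrightarrow> \<phi> x = \<phi> y \<Longrightarrow> \<exists>w\<in>S. w \<otimes> x = w \<otimes> y"
  shows "inj_on (extm R S Q \<sigma> T \<phi>) (carrier Q)"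
proof (rule inj_onI)
  fix q1 q2 assume q: "q1 \<in> carrier Q" "q2 \<in> carrier Q" and e: "extm R S Q \<sigma> T \<phi> q1 = extm R S Q \<sigma> T \<phi> q2"
  then obtain s a t b where sa: "s \<in> S" "a \<in> carrier R" "q1 = fr Q \<sigma> s a" and tb: "t \<in> S" "b \<in> carrier R" "q2 = fr Q \<sigma> t b"
    using Q_rep by meson
  obtain u c where uc: "u \<in> S" "c \<in> carrier R" "u \<otimes> t = c \<otimes> s" using ore[OF sa(1) S_carr'[OF tb(1)]] by blast
  have "fr T \<phi> s a = fr T \<phi> t b" using e sa tb tr_frac by simp
  then have "\<phi> (c \<otimes> a) = \<phi> (u \<otimes> b)" using frT_eq[OF sa(1) tb(1) uc(1) sa(2) tb(2) uc(2,3)] by simp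
  then obtain w where "w \<in> S" "w \<otimes> (c \<otimes> a) = w \<otimes> (u \<otimes> b)" using refl uc sa tb S_carr' by (meson m_closed)
  then show "q1 = q2" using fr_eq[OF sa(1) tb(1) uc(1) sa(2) tb(2) uc(2,3)] sa tb by blast
qed

lemma tr_img: "extm R S Q \<sigma> T \<phi> ` carrier Q = {fr T \<phi> s r | s r. s \<in> S \<and> r \<in> carrier R}"
proof
  show "extm R S Q \<sigma> T \<phi> ` carrier Q \<subseteq> {fr T \<phi> s r | s r. s \<in> S \<and> r \<in> carrier R}"
  proof
    fix y assume "y \<in> extm R S Q \<sigma> T \<phi> ` carrier Q"
    then obtain q where "q \<in> carrier Q" "y = extm R S Q \<sigma> T \<phi> q" by blast
    then obtain s r where "s \<in> S" "r \<in> carrier R" "q = fr Q \<sigma> s r" using Q_rep by blast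
    then show "y \<in> {fr T \<phi> s r | s r. s \<in> S \<and> r \<in> carrier R}" using \<open>y = _\<close> tr_frac by auto
  qed
next
  show "{fr T \<phi> s r | s r. s \<in> S \<and> r \<in> carrier R} \<subseteq> extm R S Q \<sigma> T \<phi> ` carrier Q"
  proof
    fix y assume "y \<in> {fr T \<phi> s r | s r. s \<in> S \<and> r \<in> carrier R}"
    then obtain s r where "s \<in> S" "r \<in> carrier R" "y = fr T \<phi> s r" by blast
    then show "y \<in> extm R S Q \<sigma> T \<phi> ` carrier Q" using tr_frac fr_closed by (metis image_eqI)
  qed
qed

end
end

locale dlds = dring R D + lds R S for R (structure) and D and S +
  assumes S0: "S \<subseteq> nil_part R D 0"
begin

lemma dS: "d \<in> D \<Longrightarrow> s \<in> S \<Longrightarrow> d s = \<zero>"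
  using S0 unfolding nil_part_0 by blast

lemma d_Sl: assumes "d \<in> D" "s \<in> S" "x \<in> carrier R" shows "d (s \<otimes> x) = s \<otimes> d x"
  using d_mult[OF assms(1) S_carr'[OF assms(2)] assms(3)] dS[OF assms(1,2)] assms S_carr' d_closed by simp

lemma d_Sr: assumes "d \<in> D" "s \<in> S" "x \<in> carrier R" shows "d (x \<otimes> s) = d x \<otimes> s"
  using d_mult[OF assms(1) assms(3) S_carr'[OF assms(2)]] dS[OF assms(1,2)] assms S_carr' d_closed by simp

lemma foldr_Sl: "set ds \<subseteq> D \<Longrightarrow> s \<in> S \<Longrightarrow> x \<in> carrier R \<Longrightarrow>
    foldr (\<lambda>d x. d x) ds (s \<otimes> x) = s \<otimes> foldr (\<lambda>d x. d x) ds x"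
  by (induction ds) (auto simp: d_Sl foldr_closed)

lemma foldr_Sr: "set ds \<subseteq> D \<Longrightarrow> s \<in> S \<Longrightarrow> x \<in> carrier R \<Longrightarrow>
    foldr (\<lambda>d x. d x) ds (x \<otimes> s) = foldr (\<lambda>d x. d x) ds x \<otimes> s"
  by (induction ds) (auto simp: d_Sr foldr_closed)

lemma d_ass: assumes "d \<in> D" "x \<in> ass R S" shows "d x \<in> ass R S"
proof -
  obtain s where s: "s \<in> S" "s \<otimes> x = \<zero>" "x \<in> carrier R" using assms unfolding ass_def by blast
  have "s \<otimes> d x = \<zero>" using d_Sl[OF assms(1) s(1) s(3)] s d_zero[OF assms(1)] by simp
  then show ?thesis using s d_closed[OF assms(1) s(3)] unfolding ass_def by blast
qed

lemma zero_ass: "\<zero> \<in> ass R S" unfolding ass_def using one_S by force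

lemma S_N: "S \<subseteq> nil_all R D" using S0 nil_part_sub_all by blast

lemma Nring_simps: "carrier (Nring R D) = nil_all R D" "monoid.mult (Nring R D) = monoid.mult R" "monoid.one (Nring R D) = monoid.one R"
  "ring.zero (Nring R D) = ring.zero R" "ring.add (Nring R D) = ring.add R"
  unfolding Nring_def by simp_all

lemma lds_N: assumes fin: "finite D \<or> ass R S \<subseteq> {\<zero>}" shows "left_denominator_set (Nring R D) S"
proof -
  have ms: "mult_set (Nring R D) S" unfolding mult_set_def Nring_simps
    using S_N one_S zero_notS S_mult by auto
  have ore': "\<exists>t\<in>S. \<exists>r'\<in>nil_all R D. t \<otimes> r = r' \<otimes> s" if s: "s \<in> S" and r: "r \<in> nil_all R D" for s r
  proof -
    obtain i where ri: "r \<in> nil_part R D i" using r unfolding nil_all_def by blast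
    have rc: "r \<in> carrier R" using ri nil_part_carr by blast
    obtain t r' where tr: "t \<in> S" "r' \<in> carrier R" "t \<otimes> r = r' \<otimes> s" using ore[OF s rc] by blast
    let ?L = "{ds. set ds \<subseteq> D \<and> length ds = Suc i}"
    let ?F = "(\<lambda>ds. foldr (\<lambda>d x. d x) ds r') ` ?L"
    have Fass: "?F \<subseteq> ass R S"
    proof
      fix y assume "y \<in> ?F"
      then obtain ds where ds: "set ds \<subseteq> D" "length ds = Suc i" "y = foldr (\<lambda>d x. d x) ds r'" by blast
      have yc: "y \<in> carrier R" using ds foldr_closed tr by simp
      have "y \<otimes> s = foldr (\<lambda>d x. d x) ds (r' \<otimes> s)" using foldr_Sr[OF ds(1) s tr(2)] ds by simp
      also have "\<dots> = foldr (\<lambda>d x. d x) ds (t \<otimes> r)" using tr by simp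
      also have "\<dots> = t \<otimes> foldr (\<lambda>d x. d x) ds r" using foldr_Sl[OF ds(1) tr(1) rc] .
      also have "\<dots> = \<zero>" using ri ds tr S_carr' unfolding nil_part_def by simp
      finally have "y \<otimes> s = \<zero>" .
      then obtain v where "v \<in> S" "v \<otimes> y = \<zero>" using canc[OF yc s] by blast
      then show "y \<in> ass R S" using yc unfolding ass_def by blast
    qed
    have "finite ?F \<or> ?F \<subseteq> {\<zero>}" using fin Fass finite_lists_length_eq[of D "Suc i"] by blast
    then obtain u where u: "u \<in> S" "\<forall>y\<in>?F. u \<otimes> y = \<zero>" using killer[OF Fass] by blast
    have "u \<otimes> r' \<in> nil_part R D i"
    proof -
      have "foldr (\<lambda>d x. d x) ds (u \<otimes> r') = \<zero>" if "length ds = Suc i" "set ds \<subseteq> D" for ds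
        using foldr_Sl[OF that(2) u(1) tr(2)] u(2) that by auto
      then show ?thesis unfolding nil_part_def using u tr S_carr' by auto
    qed
    moreover have "(u \<otimes> t) \<otimes> r = (u \<otimes> r') \<otimes> s" using tr u s rc S_carr' by (simp add: m_assoc)
    ultimately show ?thesis using S_mult[OF u(1) tr(1)] nil_part_sub_all by blast
  qed
  have cn: "\<exists>t\<in>S. t \<otimes> r = \<zero>" if "r \<in> nil_all R D" "s \<in> S" "r \<otimes> s = \<zero>" for r s
    using canc that nil_all_M M_carr by blast
  show ?thesis unfolding left_denominator_set_def left_ore_def Nring_simps using ms ore' cn by auto
qed

lemma ass_N: "ass (Nring R D) S = nil_all R D \<inter> ass R S"
  unfolding ass_def Nring_simps using nil_all_M M_carr by blast

end

locale dlfr = dlds R D S + lfr R S Q \<sigma> for R (structure) and D S and Q :: "('q,'c) ring_scheme" and \<sigma>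
begin

lemma ld_wd:
  assumes d: "d \<in> D" and st: "s \<in> S" "t \<in> S" and rr: "r \<in> carrier R" "r' \<in> carrier R"
    and e: "fr Q \<sigma> s r = fr Q \<sigma> t r'"
  shows "fr Q \<sigma> s (d r) = fr Q \<sigma> t (d r')"
proof -
  obtain u b where ub: "u \<in> S" "b \<in> carrier R" "u \<otimes> t = b \<otimes> s" using ore[OF st(1) S_carr'[OF st(2)]] by blast
  obtain w where w: "w \<in> S" "w \<otimes> (b \<otimes> r) = w \<otimes> (u \<otimes> r')" using fr_eq[OF st ub(1) rr ub(2,3)] e by blast
  have c: "s \<in> carrier R" "t \<in> carrier R" "u \<in> carrier R" "w \<in> carrier R" "d r \<in> carrier R" "d r' \<in> carrier R" "d b \<in> carrier R"
    using st ub w S_carr' d_closed[OF d] rr by auto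
  have "d (w \<otimes> (b \<otimes> r)) = w \<otimes> (d b \<otimes> r \<oplus> b \<otimes> d r)"
    using d_Sl[OF d w(1)] d_mult[OF d ub(2) rr(1)] ub rr by simp
  moreover have "d (w \<otimes> (u \<otimes> r')) = w \<otimes> (u \<otimes> d r')"
    using d_Sl[OF d w(1)] d_Sl[OF d ub(1) rr(2)] ub rr c by simp
  ultimately have E1: "w \<otimes> (d b \<otimes> r \<oplus> b \<otimes> d r) = w \<otimes> (u \<otimes> d r')" using w by simp
  have "d b \<otimes> s = d (b \<otimes> s)" using d_Sr[OF d st(1) ub(2)] by simp
  also have "\<dots> = d (u \<otimes> t)" using ub by simp
  also have "\<dots> = \<zero>" using d_Sl[OF d ub(1) c(2)] dS[OF d st(2)] c by simp
  finally obtain v where v: "v \<in> S" "v \<otimes> d b = \<zero>" using canc[OF c(7) st(1)] by blast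
  obtain t' cc where tc: "t' \<in> S" "cc \<in> carrier R" "t' \<otimes> w = cc \<otimes> v" using ore[OF v(1) c(4)] by blast
  have c2: "t' \<in> carrier R" "v \<in> carrier R" using tc v S_carr' by auto
  have Z: "(t' \<otimes> w) \<otimes> (d b \<otimes> r) = \<zero>"
  proof -
    have "(t' \<otimes> w) \<otimes> (d b \<otimes> r) = cc \<otimes> (v \<otimes> d b) \<otimes> r" using tc c c2 rr by (simp add: m_assoc)
    then show ?thesis using v tc rr c by simp
  qed
  have "(t' \<otimes> w) \<otimes> (b \<otimes> d r) = (t' \<otimes> w) \<otimes> (d b \<otimes> r) \<oplus> (t' \<otimes> w) \<otimes> (b \<otimes> d r)"
    using Z c c2 ub rr by simp
  also have "\<dots> = t' \<otimes> (w \<otimes> (d b \<otimes> r \<oplus> b \<otimes> d r))" using c c2 ub rr by (simp add: m_assoc r_distr)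
  also have "\<dots> = t' \<otimes> (w \<otimes> (u \<otimes> d r'))" using E1 by simp
  also have "\<dots> = (t' \<otimes> w) \<otimes> (u \<otimes> d r')" using c c2 by (simp add: m_assoc)
  finally have "(t' \<otimes> w) \<otimes> (b \<otimes> d r) = (t' \<otimes> w) \<otimes> (u \<otimes> d r')" .
  then show ?thesis using fr_eq[OF st ub(1) c(5,6) ub(2,3)] S_mult[OF tc(1) w(1)] by blast
qed

lemma ld_frac: assumes d: "d \<in> D" and "s \<in> S" "r \<in> carrier R"
  shows "loc_der R S Q \<sigma> d (fr Q \<sigma> s r) = fr Q \<sigma> s (d r)"
proof -
  let ?P = "\<lambda>y. \<exists>s'\<in>S. \<exists>r'\<in>carrier R. fr Q \<sigma> s r = fr Q \<sigma> s' r' \<and> y = fr Q \<sigma> s' (d r')"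
  have "?P (fr Q \<sigma> s (d r))" using assms by blast
  then have "?P (SOME y. ?P y)" by (rule someI)
  then obtain s' r' where "s' \<in> S" "r' \<in> carrier R" "fr Q \<sigma> s r = fr Q \<sigma> s' r'" "(SOME y. ?P y) = fr Q \<sigma> s' (d r')" by blast
  moreover have "loc_der R S Q \<sigma> d (fr Q \<sigma> s r) = (SOME y. ?P y)"
    unfolding loc_der_def fr_def by simp
  ultimately show ?thesis using ld_wd[OF d assms(2) _ assms(3)] by simp
qed

lemma ld_foldr: "set ds \<subseteq> D \<Longrightarrow> s \<in> S \<Longrightarrow> r \<in> carrier R \<Longrightarrow>
  foldr (\<lambda>d x. d x) (map (loc_der R S Q \<sigma>) ds) (fr Q \<sigma> s r) = fr Q \<sigma> s (foldr (\<lambda>d x. d x) ds r)"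
  by (induction ds) (auto simp: ld_frac foldr_closed)

lemma fr_zero: assumes "s \<in> S" "x \<in> carrier R" shows "fr Q \<sigma> s x = \<zero>\<^bsub>Q\<^esub> \<longleftrightarrow> x \<in> ass R S"
proof -
  have "fr Q \<sigma> s x = \<zero>\<^bsub>Q\<^esub> \<longleftrightarrow> \<sigma> x = \<zero>\<^bsub>Q\<^esub>"
  proof
    assume h: "fr Q \<sigma> s x = \<zero>\<^bsub>Q\<^esub>"
    have u: "\<sigma> s \<in> carrier Q" "inv\<^bsub>Q\<^esub> (\<sigma> s) \<in> carrier Q" "\<sigma> x \<in> carrier Q"
      using sig_units[OF assms(1)] assms by auto
    have "\<sigma> x = \<sigma> s \<otimes>\<^bsub>Q\<^esub> fr Q \<sigma> s x" unfolding fr_def using sig_units[OF assms(1)] u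
      by (simp add: Q.m_assoc[symmetric])
    then show "\<sigma> x = \<zero>\<^bsub>Q\<^esub>" using h u by simp
  qed (simp add: fr_def sig_units assms)
  then show ?thesis using sig_ker assms by simp
qed

lemma fr_cancel: assumes "u \<in> S" "s \<in> S" "r \<in> carrier R" shows "fr Q \<sigma> (u \<otimes> s) (u \<otimes> r) = fr Q \<sigma> s r"
proof -
  have "fr Q \<sigma> (u \<otimes> s) (u \<otimes> r) = inv\<^bsub>Q\<^esub> (\<sigma> s) \<otimes>\<^bsub>Q\<^esub> inv\<^bsub>Q\<^esub> (\<sigma> u) \<otimes>\<^bsub>Q\<^esub> (\<sigma> u \<otimes>\<^bsub>Q\<^esub> \<sigma> r)"
    unfolding fr_def using assms S_carr' Q.U_inv_mult[OF sig_units sig_units] by simp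
  also have "\<dots> = fr Q \<sigma> s r" unfolding fr_def using assms S_carr' sig_units
    by (simp add: Q.m_assoc[symmetric]) (simp add: Q.m_assoc)
  finally show ?thesis .
qed

lemma loc_sub_fr: "loc_sub S Q \<sigma> M = {fr Q \<sigma> s m | s m. s \<in> S \<and> m \<in> M}"
  unfolding loc_sub_def fr_def by simp

lemma Mprime: "nil_part Q (loc_ders R S Q \<sigma> D) i =
   {fr Q \<sigma> s r | s r. s \<in> S \<and> r \<in> carrier R \<and>
      (\<forall>ds. length ds = Suc i \<longrightarrow> set ds \<subseteq> D \<longrightarrow> foldr (\<lambda>d x. d x) ds r \<in> ass R S)}"
proof
  show "nil_part Q (loc_ders R S Q \<sigma> D) i \<subseteq> {fr Q \<sigma> s r | s r. s \<in> S \<and> r \<in> carrier R \<and>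
      (\<forall>ds. length ds = Suc i \<longrightarrow> set ds \<subseteq> D \<longrightarrow> foldr (\<lambda>d x. d x) ds r \<in> ass R S)}"
  proof
    fix q assume q: "q \<in> nil_part Q (loc_ders R S Q \<sigma> D) i"
    then obtain s r where sr: "s \<in> S" "r \<in> carrier R" "q = fr Q \<sigma> s r" using Q_rep unfolding nil_part_def by blast
    have "foldr (\<lambda>d x. d x) ds r \<in> ass R S" if ds: "length ds = Suc i" "set ds \<subseteq> D" for ds
    proof -
      have "set (map (loc_der R S Q \<sigma>) ds) \<subseteq> loc_ders R S Q \<sigma> D" using ds unfolding loc_ders_def by auto
      then have "foldr (\<lambda>d x. d x) (map (loc_der R S Q \<sigma>) ds) q = \<zero>\<^bsub>Q\<^esub>" using q ds unfolding nil_part_def by auto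
      then show ?thesis using ld_foldr[OF ds(2) sr(1,2)] sr fr_zero foldr_closed[OF ds(2) sr(2)] by simp
    qed
    then show "q \<in> {fr Q \<sigma> s r | s r. s \<in> S \<and> r \<in> carrier R \<and>
      (\<forall>ds. length ds = Suc i \<longrightarrow> set ds \<subseteq> D \<longrightarrow> foldr (\<lambda>d x. d x) ds r \<in> ass R S)}" using sr by blast
  qed
next
  show "{fr Q \<sigma> s r | s r. s \<in> S \<and> r \<in> carrier R \<and>
      (\<forall>ds. length ds = Suc i \<longrightarrow> set ds \<subseteq> D \<longrightarrow> foldr (\<lambda>d x. d x) ds r \<in> ass R S)} \<subseteq> nil_part Q (loc_ders R S Q \<sigma> D) i"
  proof
    fix q assume "q \<in> {fr Q \<sigma> s r | s r. s \<in> S \<and> r \<in> carrier R \<and>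
      (\<forall>ds. length ds = Suc i \<longrightarrow> set ds \<subseteq> D \<longrightarrow> foldr (\<lambda>d x. d x) ds r \<in> ass R S)}"
    then obtain s r where sr: "s \<in> S" "r \<in> carrier R" "q = fr Q \<sigma> s r"
      and H: "\<forall>ds. length ds = Suc i \<longrightarrow> set ds \<subseteq> D \<longrightarrow> foldr (\<lambda>d x. d x) ds r \<in> ass R S" by blast
    have "foldr (\<lambda>d x. d x) ds' q = \<zero>\<^bsub>Q\<^esub>" if ds': "length ds' = Suc i" "set ds' \<subseteq> loc_ders R S Q \<sigma> D" for ds'
    proof -
      obtain ds where ds: "set ds \<subseteq> D" "ds' = map (loc_der R S Q \<sigma>) ds"
        using list_lift[of ds' "loc_der R S Q \<sigma>" D] ds' unfolding loc_ders_def by blast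
      then show ?thesis using ld_foldr[OF ds(1) sr(1,2)] sr fr_zero foldr_closed[OF ds(1) sr(2)] H ds' by simp
    qed
    then show "q \<in> nil_part Q (loc_ders R S Q \<sigma> D) i" unfolding nil_part_def using sr fr_closed by blast
  qed
qed

lemma Mfin: assumes fin: "finite D \<or> ass R S \<subseteq> {\<zero>}"
  shows "nil_part Q (loc_ders R S Q \<sigma> D) i = loc_sub S Q \<sigma> (nil_part R D i)"
  unfolding Mprime loc_sub_fr
proof
  show "{fr Q \<sigma> s m | s m. s \<in> S \<and> m \<in> nil_part R D i} \<subseteq> {fr Q \<sigma> s r | s r. s \<in> S \<and> r \<in> carrier R \<and>
      (\<forall>ds. length ds = Suc i \<longrightarrow> set ds \<subseteq> D \<longrightarrow> foldr (\<lambda>d x. d x) ds r \<in> ass R S)}"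
    unfolding nil_part_def using zero_ass by force
next
  show "{fr Q \<sigma> s r | s r. s \<in> S \<and> r \<in> carrier R \<and>
      (\<forall>ds. length ds = Suc i \<longrightarrow> set ds \<subseteq> D \<longrightarrow> foldr (\<lambda>d x. d x) ds r \<in> ass R S)}
     \<subseteq> {fr Q \<sigma> s m | s m. s \<in> S \<and> m \<in> nil_part R D i}"
  proof
    fix q assume "q \<in> {fr Q \<sigma> s r | s r. s \<in> S \<and> r \<in> carrier R \<and>
      (\<forall>ds. length ds = Suc i \<longrightarrow> set ds \<subseteq> D \<longrightarrow> foldr (\<lambda>d x. d x) ds r \<in> ass R S)}"
    then obtain s r where sr: "s \<in> S" "r \<in> carrier R" "q = fr Q \<sigma> s r"
      and H: "\<forall>ds. length ds = Suc i \<longrightarrow> set ds \<subseteq> D \<longrightarrow> foldr (\<lambda>d x. d x) ds r \<in> ass R S" by blast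
    let ?F = "(\<lambda>ds. foldr (\<lambda>d x. d x) ds r) ` {ds. set ds \<subseteq> D \<and> length ds = Suc i}"
    have Fass: "?F \<subseteq> ass R S" using H by auto
    have "finite ?F \<or> ?F \<subseteq> {\<zero>}" using fin Fass finite_lists_length_eq[of D "Suc i"] by blast
    then obtain u where u: "u \<in> S" "\<forall>y\<in>?F. u \<otimes> y = \<zero>" using killer[OF Fass] by blast
    have "u \<otimes> r \<in> nil_part R D i"
    proof -
      have "foldr (\<lambda>d x. d x) ds (u \<otimes> r) = \<zero>" if "length ds = Suc i" "set ds \<subseteq> D" for ds
        using foldr_Sl[OF that(2) u(1) sr(2)] u(2) that by auto
      then show ?thesis unfolding nil_part_def using u sr S_carr' by auto
    qed
    moreover have "q = fr Q \<sigma> (u \<otimes> s) (u \<otimes> r)" using fr_cancel u sr by simp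
    ultimately show "q \<in> {fr Q \<sigma> s m | s m. s \<in> S \<and> m \<in> nil_part R D i}" using S_mult[OF u(1) sr(1)] by blast
  qed
qed

lemma Mfin_all: assumes fin: "finite D \<or> ass R S \<subseteq> {\<zero>}"
  shows "nil_all Q (loc_ders R S Q \<sigma> D) = loc_sub S Q \<sigma> (nil_all R D)"
  unfolding nil_all_def Mfin[OF fin] loc_sub_def by blast

end

lemma iso_restrict:
  fixes R1 :: "('a,'b) ring_scheme" and R2 :: "('c,'d) ring_scheme"
  assumes "h \<in> ring_iso R1 R2" "XX \<subseteq> carrier R1" "h ` XX = YY"
  shows "h \<in> ring_iso (R1\<lparr>carrier := XX\<rparr>) (R2\<lparr>carrier := YY\<rparr>)"
proof -
  have hom: "h \<in> ring_hom R1 R2" and bij: "bij_betw h (carrier R1) (carrier R2)" using assms(1) unfolding ring_iso_def by auto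
  have "bij_betw h XX YY" using bij assms(2,3) unfolding bij_betw_def by (auto intro: inj_on_subset)
  moreover have "\<And>x y. x \<in> XX \<Longrightarrow> y \<in> XX \<Longrightarrow> h (x \<otimes>\<^bsub>R1\<^esub> y) = h x \<otimes>\<^bsub>R2\<^esub> h y \<and> h (x \<oplus>\<^bsub>R1\<^esub> y) = h x \<oplus>\<^bsub>R2\<^esub> h y"
    using hom assms(2) unfolding ring_hom_def by blast
  ultimately show ?thesis using hom assms(2,3) unfolding ring_iso_def ring_hom_def bij_betw_def by auto
qed

locale qsit = dlds E \<Delta> S for E (structure) and \<Delta> S +
  fixes I assumes idl: "ideal I E" and assI: "ass E S = I"
begin

interpretation I: ideal I E by (rule idl)

lemma I_carr: "I \<subseteq> carrier E" using I.a_subset .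

lemma quot_elem: "C \<in> carrier (E Quot I) \<Longrightarrow> \<exists>e\<in>carrier E. C = I +> e"
  unfolding FactRing_def A_RCOSETS_def' by auto

lemma quot_in: "e \<in> carrier E \<Longrightarrow> I +> e \<in> carrier (E Quot I)"
  unfolding FactRing_def A_RCOSETS_def' by auto

lemma Qring: "ring (E Quot I)" by (rule I.quotient_is_ring)

lemma q_mult: "x \<in> carrier E \<Longrightarrow> y \<in> carrier E \<Longrightarrow> (I +> x) \<otimes>\<^bsub>E Quot I\<^esub> (I +> y) = I +> (x \<otimes> y)"
  using ring_hom_mult[OF I.rcos_ring_hom] by metis

lemma q_add: "x \<in> carrier E \<Longrightarrow> y \<in> carrier E \<Longrightarrow> (I +> x) \<oplus>\<^bsub>E Quot I\<^esub> (I +> y) = I +> (x \<oplus> y)"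
  using ring_hom_add[OF I.rcos_ring_hom] by metis

lemma q_one: "\<one>\<^bsub>E Quot I\<^esub> = I +> \<one>" unfolding FactRing_def by simp
lemma q_zero: "\<zero>\<^bsub>E Quot I\<^esub> = I" unfolding FactRing_def by simp

lemma q_eq_zero: "x \<in> carrier E \<Longrightarrow> I +> x = I \<longleftrightarrow> x \<in> I"
  using I.rcos_const_imp_mem I.a_rcos_const by blast

lemma q_eq: assumes "x \<in> carrier E" "y \<in> carrier E" shows "I +> x = I +> y \<longleftrightarrow> x \<ominus> y \<in> I"
proof
  assume "I +> x = I +> y"
  then have "x \<in> I +> y" using I.a_rcos_self assms by metis
  then show "x \<ominus> y \<in> I" using I.a_rcos_module_minus[OF ring_axioms assms(2,1)] by simp
next
  assume "x \<ominus> y \<in> I"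
  then have "x \<in> I +> y" using I.a_rcos_module_minus[OF ring_axioms assms(2,1)] by simp
  then show "I +> x = I +> y" using I.a_repr_independence'[OF _ assms(2)] by simp
qed

lemma dI: "d \<in> \<Delta> \<Longrightarrow> x \<in> I \<Longrightarrow> d x \<in> I" using d_ass assI by blast

lemma qd_val: assumes d: "d \<in> \<Delta>" and e: "e \<in> carrier E" shows "quot_der E I d (I +> e) = I +> d e"
proof -
  let ?e = "SOME e'. e' \<in> I +> e"
  have "?e \<in> I +> e" using I.a_rcos_self[OF e] by (rule someI)
  then have ec: "?e \<in> carrier E" and "I +> ?e = I +> e"
    using I.a_elemrcos_carrier[OF e] I.a_repr_independence'[OF _ e] by auto
  then have "?e \<ominus> e \<in> I" using q_eq[OF ec e] by simp
  then have "d (?e \<ominus> e) \<in> I" using dI[OF d] by blast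
  moreover have "d (?e \<ominus> e) = d ?e \<ominus> d e" using d_add[OF d ec] d_inv[OF d e] e ec by (simp add: minus_eq)
  ultimately have "I +> d ?e = I +> d e" using q_eq d_closed[OF d] ec e by simp
  then show ?thesis unfolding quot_der_def by simp
qed

abbreviation "Sb \<equiv> (\<lambda>s. I +> s) ` S"
abbreviation "Db \<equiv> quot_der E I ` \<Delta>"

lemma qder: assumes d: "d \<in> \<Delta>" shows "derivation (E Quot I) (quot_der E I d)"
  unfolding derivation_def
proof (intro conjI ballI)
  show "quot_der E I d \<in> carrier (E Quot I) \<rightarrow> carrier (E Quot I)"
    using quot_elem qd_val[OF d] quot_in d_closed[OF d] by fastforce
next
  fix x y assume "x \<in> carrier (E Quot I)" "y \<in> carrier (E Quot I)"
  then obtain a b where ab: "a \<in> carrier E" "b \<in> carrier E" "x = I +> a" "y = I +> b" using quot_elem by meson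
  show "quot_der E I d (x \<oplus>\<^bsub>E Quot I\<^esub> y) = quot_der E I d x \<oplus>\<^bsub>E Quot I\<^esub> quot_der E I d y"
    using ab q_add qd_val[OF d] d_add[OF d] d_closed[OF d] by simp
  show "quot_der E I d (x \<otimes>\<^bsub>E Quot I\<^esub> y) = quot_der E I d x \<otimes>\<^bsub>E Quot I\<^esub> y \<oplus>\<^bsub>E Quot I\<^esub> x \<otimes>\<^bsub>E Quot I\<^esub> quot_der E I d y"
    using ab q_add q_mult qd_val[OF d] d_mult[OF d] d_closed[OF d] by simp
qed

lemma qdring: "dring (E Quot I) Db"
  unfolding dring_def dring_axioms_def using Qring qder by blast

lemma qfoldr: "set ds \<subseteq> \<Delta> \<Longrightarrow> e \<in> carrier E \<Longrightarrow>
   foldr (\<lambda>d x. d x) (map (quot_der E I) ds) (I +> e) = I +> foldr (\<lambda>d x. d x) ds e"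
  by (induction ds) (auto simp: qd_val foldr_closed)

lemma q_lds: "left_denominator_set (E Quot I) Sb"
proof -
  have ms: "mult_set (E Quot I) Sb" unfolding mult_set_def
  proof (intro conjI ballI)
    show "Sb \<subseteq> carrier (E Quot I)" using quot_in S_carr' by blast
    show "\<one>\<^bsub>E Quot I\<^esub> \<in> Sb" using q_one one_S by blast
    show "\<zero>\<^bsub>E Quot I\<^esub> \<notin> Sb"
    proof
      assume "\<zero>\<^bsub>E Quot I\<^esub> \<in> Sb"
      then obtain s where s: "s \<in> S" "I +> s = I" using q_zero by auto
      then have "s \<in> ass E S" using q_eq_zero S_carr' assI by simp
      then obtain t where "t \<in> S" "t \<otimes> s = \<zero>" unfolding ass_def by blast
      then show False using S_mult[OF _ s(1)] zero_notS by metis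
    qed
    fix x y assume "x \<in> Sb" "y \<in> Sb"
    then show "x \<otimes>\<^bsub>E Quot I\<^esub> y \<in> Sb" using q_mult S_carr' S_mult by auto
  qed
  have ore': "\<exists>t\<in>Sb. \<exists>r'\<in>carrier (E Quot I). t \<otimes>\<^bsub>E Quot I\<^esub> r = r' \<otimes>\<^bsub>E Quot I\<^esub> s"
    if H: "s \<in> Sb" "r \<in> carrier (E Quot I)" for s r
  proof -
    obtain s0 where s0: "s0 \<in> S" "s = I +> s0" using H by blast
    obtain r0 where r0: "r0 \<in> carrier E" "r = I +> r0" using H quot_elem by blast
    note sr = s0(1) r0(1) s0(2) r0(2)
    obtain t r' where tr: "t \<in> S" "r' \<in> carrier E" "t \<otimes> r0 = r' \<otimes> s0" using ore[OF sr(1,2)] by blast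
    have "(I +> t) \<otimes>\<^bsub>E Quot I\<^esub> r = (I +> r') \<otimes>\<^bsub>E Quot I\<^esub> s" using sr tr q_mult S_carr' by simp
    then show ?thesis using tr quot_in by blast
  qed
  have cn: "\<exists>t\<in>Sb. t \<otimes>\<^bsub>E Quot I\<^esub> r = \<zero>\<^bsub>E Quot I\<^esub>"
    if H: "r \<in> carrier (E Quot I)" "s \<in> Sb" "r \<otimes>\<^bsub>E Quot I\<^esub> s = \<zero>\<^bsub>E Quot I\<^esub>" for r s
  proof -
    obtain s0 where s0: "s0 \<in> S" "s = I +> s0" using H by blast
    obtain r0 where r0: "r0 \<in> carrier E" "r = I +> r0" using H quot_elem by blast
    note sr = s0(1) r0(1) s0(2) r0(2)
    have "r0 \<otimes> s0 \<in> I" using that sr q_mult q_zero q_eq_zero S_carr' by simp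
    then obtain v where v: "v \<in> S" "v \<otimes> (r0 \<otimes> s0) = \<zero>" using assI unfolding ass_def by blast
    then have "(v \<otimes> r0) \<otimes> s0 = \<zero>" using sr S_carr' by (simp add: m_assoc)
    then obtain t where t: "t \<in> S" "t \<otimes> (v \<otimes> r0) = \<zero>" using canc[OF _ sr(1)] v sr S_carr' by blast
    then have "(t \<otimes> v) \<otimes> r0 = \<zero>" using sr v S_carr' by (simp add: m_assoc)
    then have "r0 \<in> I" using assI S_mult[OF t(1) v(1)] sr unfolding ass_def by blast
    then have "(I +> \<one>) \<otimes>\<^bsub>E Quot I\<^esub> r = \<zero>\<^bsub>E Quot I\<^esub>" using sr q_mult q_zero q_eq_zero by simp
    then show ?thesis using one_S by blast
  qed
  show ?thesis unfolding left_denominator_set_def left_ore_def using ms ore' cn by blast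
qed

lemma q_ass: "ass (E Quot I) Sb = {\<zero>\<^bsub>E Quot I\<^esub>}"
proof
  show "ass (E Quot I) Sb \<subseteq> {\<zero>\<^bsub>E Quot I\<^esub>}"
  proof
    fix r assume "r \<in> ass (E Quot I) Sb"
    then obtain s where s: "s \<in> Sb" "s \<otimes>\<^bsub>E Quot I\<^esub> r = \<zero>\<^bsub>E Quot I\<^esub>" "r \<in> carrier (E Quot I)" unfolding ass_def by blast
    obtain s0 where s0: "s0 \<in> S" "s = I +> s0" using s by blast
    obtain r0 where r0: "r0 \<in> carrier E" "r = I +> r0" using s quot_elem by blast
    note sr = s0(1) r0(1) s0(2) r0(2)
    have "s0 \<otimes> r0 \<in> I" using s sr q_mult q_zero q_eq_zero S_carr' by simp
    then obtain v where v: "v \<in> S" "v \<otimes> (s0 \<otimes> r0) = \<zero>" using assI unfolding ass_def by blast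
    then have "(v \<otimes> s0) \<otimes> r0 = \<zero>" using sr S_carr' by (simp add: m_assoc)
    then have "r0 \<in> I" using assI S_mult[OF v(1) sr(1)] sr unfolding ass_def by blast
    then show "r \<in> {\<zero>\<^bsub>E Quot I\<^esub>}" using sr q_zero q_eq_zero by simp
  qed
next
  show "{\<zero>\<^bsub>E Quot I\<^esub>} \<subseteq> ass (E Quot I) Sb"
  proof -
    have "\<one>\<^bsub>E Quot I\<^esub> \<in> Sb" using q_one one_S by blast
    moreover have "\<one>\<^bsub>E Quot I\<^esub> \<otimes>\<^bsub>E Quot I\<^esub> \<zero>\<^bsub>E Quot I\<^esub> = \<zero>\<^bsub>E Quot I\<^esub>"
      "\<zero>\<^bsub>E Quot I\<^esub> \<in> carrier (E Quot I)" using Qring by (simp_all add: ring.ring_simprules)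
    ultimately show ?thesis unfolding ass_def by blast
  qed
qed

lemma q_S0: "Sb \<subseteq> nil_part (E Quot I) Db 0"
proof -
  interpret Qd: dring "E Quot I" Db by (rule qdring)
  have z: "\<zero> \<in> I" using I.additive_subgroup_axioms by (simp add: additive_subgroup.zero_closed)
  have "quot_der E I d (I +> s) = I" if "s \<in> S" "d \<in> \<Delta>" for s d
    using qd_val[OF that(2) S_carr'[OF that(1)]] dS[OF that(2,1)] I.a_rcos_const[OF z] by simp
  then show ?thesis unfolding Qd.nil_part_0 using quot_in S_carr' q_zero by auto
qed

lemma q_dlds: "dlds (E Quot I) Db Sb"
  unfolding dlds_def dlds_axioms_def lds_def lds_axioms_def using qdring q_lds q_S0 Qring by blast

end

lemma iso_from_inj:
  fixes R1 :: "('a,'b) ring_scheme" and R2 :: "('c,'d) ring_scheme"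
  assumes "G \<in> ring_hom R1 R2" "inj_on G (carrier R1)" "G ` carrier R1 = YY"
  shows "G \<in> ring_iso R1 (R2\<lparr>carrier := YY\<rparr>)"
  using assms unfolding ring_iso_def ring_hom_def bij_betw_def by auto

lemma hom_restrict:
  fixes R1 :: "('a,'b) ring_scheme" and R2 :: "('c,'d) ring_scheme"
  assumes "G \<in> ring_hom R1 R2" "XX \<subseteq> carrier R1"
  shows "G \<in> ring_hom (R1\<lparr>carrier := XX\<rparr>) R2"
proof -
  have "\<And>x y. x \<in> XX \<Longrightarrow> y \<in> XX \<Longrightarrow> G (x \<otimes>\<^bsub>R1\<^esub> y) = G x \<otimes>\<^bsub>R2\<^esub> G y \<and> G (x \<oplus>\<^bsub>R1\<^esub> y) = G x \<oplus>\<^bsub>R2\<^esub> G y"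
    using assms unfolding ring_hom_def by blast
  then show ?thesis using assms unfolding ring_hom_def by auto
qed

context lds
begin
lemma w_eq_ass: assumes "x \<in> carrier R" "y \<in> carrier R"
  shows "(\<exists>w\<in>S. w \<otimes> x = w \<otimes> y) \<longleftrightarrow> x \<ominus> y \<in> ass R S"
proof -
  have "w \<otimes> (x \<ominus> y) = w \<otimes> x \<ominus> w \<otimes> y" if "w \<in> S" for w
    using that assms S_carr' by (simp add: minus_eq r_distr r_minus)
  then show ?thesis using assms S_carr' unfolding ass_def by auto
qed
end

locale msit =
  fixes K :: "'k ring" and E :: "'e ring" (structure) and phi :: "'k \<Rightarrow> 'e"
    and A :: "'e set" and \<Delta> :: "('e \<Rightarrow> 'e) set" and I :: "'e set" and S :: "'e set"
  assumes kal: "kalgebra K E phi"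
    and sub: "subalgebra K E phi A"
    and der: "\<forall>d\<in>\<Delta>. der_A E A d"
    and idl: "ideal I E"
    and ldsE: "left_denominator_set E S"
    and assI0: "ass E S = I"
    and S00: "S \<subseteq> nil_part E \<Delta> 0"
begin

lemma Ering: "ring E" using kal unfolding kalgebra_def by blast
lemma phi_hom: "phi \<in> ring_hom K E" using kal unfolding kalgebra_def by blast
lemma A_carr: "A \<subseteq> carrier E" using sub unfolding subalgebra_def using subringE(1) by blast
lemma phiA: "k \<in> carrier K \<Longrightarrow> phi k \<in> A" using sub unfolding subalgebra_def by blast
lemma derE: "d \<in> \<Delta> \<Longrightarrow> derivation E d" using der unfolding der_A_def by blast
lemma derAlin: "d \<in> \<Delta> \<Longrightarrow> a \<in> A \<Longrightarrow> x \<in> carrier E \<Longrightarrow> d (a \<otimes> x) = a \<otimes> d x"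
  using der unfolding der_A_def by blast

sublocale qs: qsit E \<Delta> S I
  unfolding qsit_def qsit_axioms_def dlds_def dlds_axioms_def dring_def dring_axioms_def lds_def lds_axioms_def
  using Ering derE ldsE S00 idl assI0 by blast

lemma phiN0: assumes "k \<in> carrier K" shows "phi k \<in> nil_part E \<Delta> 0"
proof -
  have c: "phi k \<in> carrier E" using phiA[OF assms] A_carr by blast
  have "d (phi k) = \<zero>" if d: "d \<in> \<Delta>" for d
    using derAlin[OF d phiA[OF assms], of \<one>] qs.d_one[OF d] c by simp
  then show ?thesis unfolding qs.nil_part_0 using c by blast
qed

lemma phiN: "k \<in> carrier K \<Longrightarrow> phi k \<in> nil_all E \<Delta>"
  using phiN0 qs.nil_part_sub_all by blast

lemma phiNb: assumes "k \<in> carrier K" shows "I +> phi k \<in> nil_all (E Quot I) qs.Db"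
proof -
  interpret Qd: dring "E Quot I" qs.Db by (rule qs.qdring)
  have c: "phi k \<in> carrier E" using phiA[OF assms] A_carr by blast
  have z: "\<zero> \<in> I" using idl by (simp add: additive_subgroup.zero_closed ideal.axioms(1))
  have "quot_der E I d (I +> phi k) = I" if "d \<in> \<Delta>" for d
    using qs.qd_val[OF that c] phiN0[OF assms] that z qs.q_eq_zero qs.d_closed[OF that c] unfolding qs.nil_part_0 by simp
  then have "I +> phi k \<in> nil_part (E Quot I) qs.Db 0" unfolding Qd.nil_part_0 using qs.quot_in c qs.q_zero by auto
  then show ?thesis using Qd.nil_part_sub_all by blast
qed

end

context msit
begin

lemma part1:
  "(\<forall>d\<in>\<Delta>. d ` I \<subseteq> I) \<and>
    (\<forall>d\<in>\<Delta>. der_A (E Quot I) ((\<lambda>a. I +>\<^bsub>E\<^esub> a) ` A) (quot_der E I d) \<and>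
        (\<forall>e\<in>carrier E. quot_der E I d (I +>\<^bsub>E\<^esub> e) = I +>\<^bsub>E\<^esub> d e))"
proof (intro conjI ballI)
  show "d ` I \<subseteq> I" if "d \<in> \<Delta>" for d using qs.dI[OF that] by blast
  show "quot_der E I d (I +> e) = I +> d e" if "d \<in> \<Delta>" "e \<in> carrier E" for d e
    using qs.qd_val that by blast
  show "der_A (E Quot I) ((\<lambda>a. I +> a) ` A) (quot_der E I d)" if d: "d \<in> \<Delta>" for d
    unfolding der_A_def
  proof (intro conjI ballI)
    show "derivation (E Quot I) (quot_der E I d)" using qs.qder[OF d] .
    fix a' x assume a': "a' \<in> (\<lambda>a. I +> a) ` A" and x: "x \<in> carrier (E Quot I)"
    obtain a where a: "a \<in> A" "a' = I +> a" using a' by blast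
    obtain e where e: "e \<in> carrier E" "x = I +> e" using qs.quot_elem[OF x] by blast
    have ac: "a \<in> carrier E" using a A_carr by blast
    show "quot_der E I d (a' \<otimes>\<^bsub>E Quot I\<^esub> x) = a' \<otimes>\<^bsub>E Quot I\<^esub> quot_der E I d x"
      using a e ac qs.q_mult qs.qd_val[OF d] derAlin[OF d a(1) e(1)] qs.d_closed[OF d e(1)] by simp
  qed
qed

lemma part2: "finite \<Delta> \<longrightarrow> left_denominator_set (Nring E \<Delta>) S \<and> ass (Nring E \<Delta>) S = nil_all E \<Delta> \<inter> I"
  using qs.lds_N qs.ass_N assI0 by blast

lemma Nsimp: "x \<otimes>\<^bsub>Nring R D\<^esub> y = x \<otimes>\<^bsub>R\<^esub> y" "\<one>\<^bsub>Nring R D\<^esub> = \<one>\<^bsub>R\<^esub>" "carrier (Nring R D) = nil_all R D"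
  unfolding Nring_def by simp_all

lemma part3:
  fixes Q :: "'q ring" and \<sigma> and Q' :: "'q2 ring" and \<sigma>'
  assumes fin: "finite \<Delta>" and lf: "left_fractions E S Q \<sigma>" and lf': "left_fractions (Nring E \<Delta>) S Q' \<sigma>'"
  shows "\<exists>f. alg_iso K (Nring Q (loc_ders E S Q \<sigma> \<Delta>)) (\<sigma> \<circ> phi) Q' (\<sigma>' \<circ> phi) f \<and>
                (\<forall>i. f ` nil_part Q (loc_ders E S Q \<sigma> \<Delta>) i
                       = loc_sub S Q' \<sigma>' (nil_part E \<Delta> i))"
proof -
  interpret L: dlfr E \<Delta> S Q \<sigma>
    unfolding dlfr_def lfr_def lfr_axioms_def lds_def lds_axioms_def using qs.dlds_axioms lf Ering ldsE by blast
  interpret N: lfr "Nring E \<Delta>" S Q' \<sigma>'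
    unfolding lfr_def lfr_axioms_def lds_def lds_axioms_def using qs.Nring_ring qs.lds_N fin lf' by blast
  let ?Dl = "loc_ders E S Q \<sigma> \<Delta>"
  have phom: "\<sigma> \<in> ring_hom (Nring E \<Delta>) Q"
    unfolding Nring_def by (rule hom_restrict[OF L.sig_hom]) (use qs.nil_all_M qs.M_carr in blast)
  define G where "G = extm (Nring E \<Delta>) S Q' \<sigma>' Q \<sigma>"
  have Ghom: "G \<in> ring_hom Q' Q" unfolding G_def using N.tr_hom[OF L.Qring phom L.sig_units] .
  have NC: "nil_all E \<Delta> \<subseteq> carrier E" using qs.nil_all_M qs.M_carr by blast
  have Ginj: "inj_on G (carrier Q')" unfolding G_def
  proof (rule N.tr_inj[OF L.Qring phom L.sig_units])
    fix x y assume "x \<in> carrier (Nring E \<Delta>)" "y \<in> carrier (Nring E \<Delta>)" "\<sigma> x = \<sigma> y"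
    then show "\<exists>w\<in>S. w \<otimes>\<^bsub>Nring E \<Delta>\<^esub> x = w \<otimes>\<^bsub>Nring E \<Delta>\<^esub> y" using L.sig_eq NC unfolding Nsimp by blast
  qed
  have Gfr: "G (fr Q' \<sigma>' s r) = fr Q \<sigma> s r" if "s \<in> S" "r \<in> nil_all E \<Delta>" for s r
    unfolding G_def using N.tr_frac[OF L.Qring phom L.sig_units] that unfolding Nsimp by blast
  have Gimg: "G ` carrier Q' = nil_all Q ?Dl"
    using N.tr_img[OF L.Qring phom L.sig_units] unfolding G_def L.Mfin_all[OF disjI1[OF fin]] L.loc_sub_fr Nsimp by simp
  have Giso: "G \<in> ring_iso Q' (Nring Q ?Dl)"
    unfolding Nring_def by (rule iso_from_inj[OF Ghom Ginj Gimg])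
  define f where "f = inv_into (carrier Q') G"
  have fiso: "f \<in> ring_iso (Nring Q ?Dl) Q'" unfolding f_def by (rule ring_iso_set_sym[OF N.Qring Giso])
  have compat: "f ((\<sigma> \<circ> phi) k) = (\<sigma>' \<circ> phi) k" if k: "k \<in> carrier K" for k
  proof -
    have pN: "phi k \<in> nil_all E \<Delta>" using phiN[OF k] .
    have "\<sigma>' (phi k) = fr Q' \<sigma>' \<one> (phi k)" using N.fr_one pN unfolding Nsimp by simp
    then have "G (\<sigma>' (phi k)) = fr Q \<sigma> \<one> (phi k)" using Gfr qs.one_S pN by simp
    also have "\<dots> = \<sigma> (phi k)" using L.fr_one pN NC by blast
    finally have "G (\<sigma>' (phi k)) = \<sigma> (phi k)" .
    moreover have "\<sigma>' (phi k) \<in> carrier Q'" using N.sh.hom_closed pN unfolding Nsimp by blast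
    ultimately show ?thesis unfolding f_def using inv_into_f_f[OF Ginj, of "\<sigma>' (phi k)"] by simp
  qed
  have nil: "f ` nil_part Q ?Dl i = loc_sub S Q' \<sigma>' (nil_part E \<Delta> i)" for i
  proof -
    have sub: "loc_sub S Q' \<sigma>' (nil_part E \<Delta> i) \<subseteq> carrier Q'"
      unfolding loc_sub_def using N.fr_closed qs.nil_part_sub_all unfolding fr_def Nsimp by blast
    have "nil_part Q ?Dl i = G ` loc_sub S Q' \<sigma>' (nil_part E \<Delta> i)"
      unfolding L.Mfin[OF disjI1[OF fin]] L.loc_sub_fr
      using Gfr qs.nil_part_sub_all unfolding loc_sub_def fr_def[symmetric] by (auto simp: image_iff) (metis subsetD)+
    then show ?thesis unfolding f_def using inv_into_image_cancel[OF Ginj sub] by simp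
  qed
  show ?thesis unfolding alg_iso_def using fiso compat nil by blast
qed

end

context msit
begin

lemma part5:
  fixes Q :: "'q ring" and \<sigma> and Qb :: "'q3 ring" and \<sigma>b and Qb' :: "'q4 ring" and \<sigma>b'
  assumes lf: "left_fractions E S Q \<sigma>"
    and lfb: "left_fractions (E Quot I) ((\<lambda>s. I +>\<^bsub>E\<^esub> s) ` S) Qb \<sigma>b"
    and lfb': "left_fractions (Nring (E Quot I) (quot_der E I ` \<Delta>)) ((\<lambda>s. I +>\<^bsub>E\<^esub> s) ` S) Qb' \<sigma>b'"
  shows "(\<exists>f. alg_iso K Qb (\<lambda>k. \<sigma>b (I +>\<^bsub>E\<^esub> phi k)) Q (\<sigma> \<circ> phi) f) \<and>
         (\<exists>g h.
            alg_iso K Qb' (\<lambda>k. \<sigma>b' (I +>\<^bsub>E\<^esub> phi k))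
              (Nring Qb (loc_ders (E Quot I) ((\<lambda>s. I +>\<^bsub>E\<^esub> s) ` S) Qb \<sigma>b (quot_der E I ` \<Delta>)))
              (\<lambda>k. \<sigma>b (I +>\<^bsub>E\<^esub> phi k)) g \<and>
            alg_iso K
              (Nring Qb (loc_ders (E Quot I) ((\<lambda>s. I +>\<^bsub>E\<^esub> s) ` S) Qb \<sigma>b (quot_der E I ` \<Delta>)))
              (\<lambda>k. \<sigma>b (I +>\<^bsub>E\<^esub> phi k))
              (Nring Q (loc_ders E S Q \<sigma> \<Delta>)) (\<sigma> \<circ> phi) h \<and>
            (\<forall>i. g ` loc_sub ((\<lambda>s. I +>\<^bsub>E\<^esub> s) ` S) Qb' \<sigma>b'
                          (nil_part (E Quot I) (quot_der E I ` \<Delta>) i)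
                   = nil_part Qb (loc_ders (E Quot I) ((\<lambda>s. I +>\<^bsub>E\<^esub> s) ` S) Qb \<sigma>b (quot_der E I ` \<Delta>)) i \<and>
                 h ` nil_part Qb (loc_ders (E Quot I) ((\<lambda>s. I +>\<^bsub>E\<^esub> s) ` S) Qb \<sigma>b (quot_der E I ` \<Delta>)) i
                   = nil_part Q (loc_ders E S Q \<sigma> \<Delta>) i))"
proof -
  interpret L: dlfr E \<Delta> S Q \<sigma>
    by (rule dlfr.intro[OF qs.dlds_axioms lfr.intro[OF lds.intro[OF Ering lds_axioms.intro[OF ldsE]] lfr_axioms.intro[OF lf]]])
  interpret Lb: dlfr "E Quot I" qs.Db qs.Sb Qb \<sigma>b
    by (rule dlfr.intro[OF qs.q_dlds lfr.intro[OF lds.intro[OF qs.Qring lds_axioms.intro[OF qs.q_lds]] lfr_axioms.intro[OF lfb]]])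
  have assb: "ass (E Quot I) qs.Sb \<subseteq> {\<zero>\<^bsub>E Quot I\<^esub>}" using qs.q_ass by simp
  interpret Nb: lfr "Nring (E Quot I) qs.Db" qs.Sb Qb' \<sigma>b'
    by (rule lfr.intro[OF lds.intro[OF Lb.Nring_ring lds_axioms.intro[OF Lb.lds_N[OF disjI2[OF assb]]]] lfr_axioms.intro[OF lfb']])
  interpret I: ideal I E by (rule idl)
  let ?Dl = "loc_ders E S Q \<sigma> \<Delta>"
  let ?Dbl = "loc_ders (E Quot I) qs.Sb Qb \<sigma>b qs.Db"
  define \<phi> where "\<phi> = \<sigma>b \<circ> (\<lambda>e. I +> e)"
  have phom: "\<phi> \<in> ring_hom E Qb" unfolding \<phi>_def by (rule ring_hom_trans[OF I.rcos_ring_hom Lb.sig_hom])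
  have pU: "\<phi> s \<in> Units Qb" if "s \<in> S" for s unfolding \<phi>_def using Lb.sig_units that by simp
  define H where "H = extm E S Q \<sigma> Qb \<phi>"
  have Hhom: "H \<in> ring_hom Q Qb" unfolding H_def by (rule L.tr_hom[OF Lb.Qring phom pU])
  have Hinj: "inj_on H (carrier Q)" unfolding H_def
  proof (rule L.tr_inj[OF Lb.Qring phom pU])
    fix x y assume xy: "x \<in> carrier E" "y \<in> carrier E" "\<phi> x = \<phi> y"
    then have "\<exists>w\<in>qs.Sb. w \<otimes>\<^bsub>E Quot I\<^esub> (I +> x) = w \<otimes>\<^bsub>E Quot I\<^esub> (I +> y)"
      using Lb.sig_eq qs.quot_in unfolding \<phi>_def by simp
    then obtain w0 where w0: "w0 \<in> S" "I +> (w0 \<otimes> x) = I +> (w0 \<otimes> y)" using qs.q_mult qs.S_carr' xy by auto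
    then have "w0 \<otimes> x \<ominus> w0 \<otimes> y \<in> ass E S" using qs.q_eq qs.S_carr' xy assI0 by simp
    then obtain v where v: "v \<in> S" "v \<otimes> (w0 \<otimes> x) = v \<otimes> (w0 \<otimes> y)" using qs.w_eq_ass[of "w0 \<otimes> x" "w0 \<otimes> y"] qs.S_carr'[OF w0(1)] xy by auto
    then show "\<exists>w\<in>S. w \<otimes> x = w \<otimes> y" using qs.S_mult[OF v(1) w0(1)] qs.S_carr' w0 xy by (metis qs.m_assoc)
  qed
  have Hfr: "H (fr Q \<sigma> s r) = fr Qb \<sigma>b (I +> s) (I +> r)" if "s \<in> S" "r \<in> carrier E" for s r
  proof -
    have "fr Qb \<phi> s r = fr Qb \<sigma>b (I +> s) (I +> r)" unfolding fr_def \<phi>_def by simp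
    then show ?thesis unfolding H_def using L.tr_frac[OF Lb.Qring phom pU that] by simp
  qed
  have Himg: "H ` carrier Q = carrier Qb"
  proof
    show "H ` carrier Q \<subseteq> carrier Qb" using ring_hom_closed[OF Hhom] by (simp add: image_subset_iff)
    show "carrier Qb \<subseteq> H ` carrier Q"
    proof
      fix q assume "q \<in> carrier Qb"
      then obtain sb rb where sr: "sb \<in> qs.Sb" "rb \<in> carrier (E Quot I)" "q = fr Qb \<sigma>b sb rb" using Lb.Q_rep by blast
      obtain s where s: "s \<in> S" "sb = I +> s" using sr by blast
      obtain r where r: "r \<in> carrier E" "rb = I +> r" using qs.quot_elem sr by blast
      have "q = H (fr Q \<sigma> s r)" using Hfr[OF s(1) r(1)] sr(3) s(2) r(2) by simp
      then show "q \<in> H ` carrier Q" using L.fr_closed[OF s(1) r(1)] by (rule image_eqI)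
    qed
  qed
  have Hiso: "H \<in> ring_iso Q Qb" unfolding ring_iso_def bij_betw_def using Hhom Hinj Himg by blast
  define f where "f = inv_into (carrier Q) H"
  have fiso: "f \<in> ring_iso Qb Q" unfolding f_def by (rule ring_iso_set_sym[OF L.Qring Hiso])
  have phic: "phi k \<in> carrier E" if "k \<in> carrier K" for k using phiA[OF that] A_carr by blast
  have Hphi: "H (\<sigma> (phi k)) = \<sigma>b (I +> phi k)" if k: "k \<in> carrier K" for k
  proof -
    have "H (\<sigma> (phi k)) = H (fr Q \<sigma> \<one> (phi k))" using L.fr_one phic[OF k] by simp
    also have "\<dots> = fr Qb \<sigma>b (I +> \<one>) (I +> phi k)" using Hfr[OF qs.one_S phic[OF k]] by simp
    also have "\<dots> = \<sigma>b (I +> phi k)" using Lb.fr_one[OF qs.quot_in[OF phic[OF k]]] qs.q_one by simp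
    finally show ?thesis .
  qed
  have compat: "f (\<sigma>b (I +> phi k)) = (\<sigma> \<circ> phi) k" if k: "k \<in> carrier K" for k
  proof -
    have "\<sigma> (phi k) \<in> carrier Q" using phic[OF k] by simp
    then show ?thesis using Hphi[OF k] unfolding f_def using inv_into_f_f[OF Hinj, of "\<sigma> (phi k)"] by simp
  qed
  have Hnil: "H ` nil_part Q ?Dl i = nil_part Qb ?Dbl i" for i
  proof -
    let ?P = "\<lambda>r. \<forall>ds. length ds = Suc i \<longrightarrow> set ds \<subseteq> \<Delta> \<longrightarrow> foldr (\<lambda>d x. d x) ds r \<in> I"
    have eqP: "(\<forall>ds'. length ds' = Suc i \<longrightarrow> set ds' \<subseteq> qs.Db \<longrightarrow> foldr (\<lambda>d x. d x) ds' (I +> r) \<in> ass (E Quot I) qs.Sb)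
               \<longleftrightarrow> ?P r" if r: "r \<in> carrier E" for r
    proof
      assume H1: "\<forall>ds'. length ds' = Suc i \<longrightarrow> set ds' \<subseteq> qs.Db \<longrightarrow> foldr (\<lambda>d x. d x) ds' (I +> r) \<in> ass (E Quot I) qs.Sb"
      show "?P r"
      proof (intro allI impI)
        fix ds :: "('e \<Rightarrow> 'e) list" assume ds: "length ds = Suc i" "set ds \<subseteq> \<Delta>"
        have "foldr (\<lambda>d x. d x) (map (quot_der E I) ds) (I +> r) \<in> ass (E Quot I) qs.Sb"
          using H1[rule_format, of "map (quot_der E I) ds"] ds by auto
        then have "I +> foldr (\<lambda>d x. d x) ds r = I" using qs.qfoldr[OF ds(2) r] qs.q_ass qs.q_zero by simp
        then show "foldr (\<lambda>d x. d x) ds r \<in> I" using qs.q_eq_zero qs.foldr_closed[OF ds(2) r] by simp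
      qed
    next
      assume H2: "?P r"
      show "\<forall>ds'. length ds' = Suc i \<longrightarrow> set ds' \<subseteq> qs.Db \<longrightarrow> foldr (\<lambda>d x. d x) ds' (I +> r) \<in> ass (E Quot I) qs.Sb"
      proof (intro allI impI)
        fix ds' assume ds': "length ds' = Suc i" "set ds' \<subseteq> qs.Db"
        obtain ds where ds: "set ds \<subseteq> \<Delta>" "ds' = map (quot_der E I) ds" using list_lift[OF ds'(2)] by blast
        have "foldr (\<lambda>d x. d x) ds r \<in> I" using H2 ds ds' by simp
        then show "foldr (\<lambda>d x. d x) ds' (I +> r) \<in> ass (E Quot I) qs.Sb"
          using qs.qfoldr[OF ds(1) r] ds qs.q_ass qs.q_zero qs.q_eq_zero qs.foldr_closed[OF ds(1) r] by simp
      qed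
    qed
    have A1: "nil_part Q ?Dl i = {fr Q \<sigma> s r | s r. s \<in> S \<and> r \<in> carrier E \<and> ?P r}"
      using L.Mprime assI0 by simp
    have A2: "nil_part Qb ?Dbl i = {fr Qb \<sigma>b sb rb | sb rb. sb \<in> qs.Sb \<and> rb \<in> carrier (E Quot I) \<and>
      (\<forall>ds'. length ds' = Suc i \<longrightarrow> set ds' \<subseteq> qs.Db \<longrightarrow> foldr (\<lambda>d x. d x) ds' rb \<in> ass (E Quot I) qs.Sb)}"
      using Lb.Mprime by simp
    show ?thesis
    proof
      show "H ` nil_part Q ?Dl i \<subseteq> nil_part Qb ?Dbl i"
      proof
        fix y assume "y \<in> H ` nil_part Q ?Dl i"
        then obtain s r where sr: "s \<in> S" "r \<in> carrier E" "?P r" "y = H (fr Q \<sigma> s r)" unfolding A1 by blast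
        then have "y = fr Qb \<sigma>b (I +> s) (I +> r)" using Hfr by simp
        moreover have "I +> s \<in> qs.Sb" using sr(1) by blast
        moreover have "I +> r \<in> carrier (E Quot I)" using qs.quot_in[OF sr(2)] .
        moreover have "\<forall>ds'. length ds' = Suc i \<longrightarrow> set ds' \<subseteq> qs.Db \<longrightarrow> foldr (\<lambda>d x. d x) ds' (I +> r) \<in> ass (E Quot I) qs.Sb"
          using eqP[OF sr(2)] sr(3) by simp
        ultimately show "y \<in> nil_part Qb ?Dbl i" unfolding A2 by blast
      qed
    next
      show "nil_part Qb ?Dbl i \<subseteq> H ` nil_part Q ?Dl i"
      proof
        fix y assume "y \<in> nil_part Qb ?Dbl i"
        then obtain sb rb where sr: "sb \<in> qs.Sb" "rb \<in> carrier (E Quot I)" "y = fr Qb \<sigma>b sb rb"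
          "\<forall>ds'. length ds' = Suc i \<longrightarrow> set ds' \<subseteq> qs.Db \<longrightarrow> foldr (\<lambda>d x. d x) ds' rb \<in> ass (E Quot I) qs.Sb"
          unfolding A2 by blast
        obtain s where s: "s \<in> S" "sb = I +> s" using sr by blast
        obtain r where r: "r \<in> carrier E" "rb = I +> r" using qs.quot_elem sr by blast
        have "?P r" using eqP[OF r(1)] sr r by simp
        then have "fr Q \<sigma> s r \<in> nil_part Q ?Dl i" unfolding A1 using s r by blast
        moreover have "y = H (fr Q \<sigma> s r)" using Hfr[OF s(1) r(1)] sr s r by simp
        ultimately show "y \<in> H ` nil_part Q ?Dl i" by blast
      qed
    qed
  qed
  have NQ: "nil_all Q ?Dl \<subseteq> carrier Q" unfolding nil_all_def nil_part_def by blast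
  have NQb: "nil_all Qb ?Dbl \<subseteq> carrier Qb" unfolding nil_all_def nil_part_def by blast
  have Hall: "H ` nil_all Q ?Dl = nil_all Qb ?Dbl" unfolding nil_all_def using Hnil by (simp add: image_UN)
  have fnil: "f ` nil_part Qb ?Dbl i = nil_part Q ?Dl i" for i
    unfolding f_def Hnil[symmetric] using Hinj by (simp add: inv_into_image_cancel nil_part_def subset_iff)
  have fall: "f ` nil_all Qb ?Dbl = nil_all Q ?Dl"
    unfolding f_def Hall[symmetric] using Hinj NQ by simp
  have hiso: "f \<in> ring_iso (Nring Qb ?Dbl) (Nring Q ?Dl)"
    unfolding Nring_def by (rule iso_restrict[OF fiso NQb fall])
  have phom': "\<sigma>b \<in> ring_hom (Nring (E Quot I) qs.Db) Qb"
    unfolding Nring_def by (rule hom_restrict[OF Lb.sig_hom]) (use Lb.nil_all_M Lb.M_carr in blast)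
  define G where "G = extm (Nring (E Quot I) qs.Db) qs.Sb Qb' \<sigma>b' Qb \<sigma>b"
  have Ghom: "G \<in> ring_hom Qb' Qb" unfolding G_def using Nb.tr_hom[OF Lb.Qring phom' Lb.sig_units] .
  have NC: "nil_all (E Quot I) qs.Db \<subseteq> carrier (E Quot I)" using Lb.nil_all_M Lb.M_carr by blast
  have Ginj: "inj_on G (carrier Qb')" unfolding G_def
  proof (rule Nb.tr_inj[OF Lb.Qring phom' Lb.sig_units])
    fix x y assume "x \<in> carrier (Nring (E Quot I) qs.Db)" "y \<in> carrier (Nring (E Quot I) qs.Db)" "\<sigma>b x = \<sigma>b y"
    then show "\<exists>w\<in>qs.Sb. w \<otimes>\<^bsub>Nring (E Quot I) qs.Db\<^esub> x = w \<otimes>\<^bsub>Nring (E Quot I) qs.Db\<^esub> y"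
      using Lb.sig_eq NC unfolding Nsimp by blast
  qed
  have Gfr: "G (fr Qb' \<sigma>b' s r) = fr Qb \<sigma>b s r" if "s \<in> qs.Sb" "r \<in> nil_all (E Quot I) qs.Db" for s r
    unfolding G_def using Nb.tr_frac[OF Lb.Qring phom' Lb.sig_units] that unfolding Nsimp by blast
  have Gimg: "G ` carrier Qb' = nil_all Qb ?Dbl"
    using Nb.tr_img[OF Lb.Qring phom' Lb.sig_units] unfolding G_def Lb.Mfin_all[OF disjI2[OF assb]] Lb.loc_sub_fr Nsimp by simp
  have Giso: "G \<in> ring_iso Qb' (Nring Qb ?Dbl)"
    unfolding Nring_def by (rule iso_from_inj[OF Ghom Ginj Gimg])
  have gcompat: "G (\<sigma>b' (I +> phi k)) = \<sigma>b (I +> phi k)" if k: "k \<in> carrier K" for k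
  proof -
    have pN: "I +> phi k \<in> nil_all (E Quot I) qs.Db" using phiNb[OF k] .
    have "\<sigma>b' (I +> phi k) = fr Qb' \<sigma>b' \<one>\<^bsub>E Quot I\<^esub> (I +> phi k)" using Nb.fr_one pN unfolding Nsimp by simp
    then have "G (\<sigma>b' (I +> phi k)) = fr Qb \<sigma>b \<one>\<^bsub>E Quot I\<^esub> (I +> phi k)" using Gfr Lb.one_S pN by simp
    also have "\<dots> = \<sigma>b (I +> phi k)" using Lb.fr_one[OF subsetD[OF NC pN]] by simp
    finally show ?thesis .
  qed
  have gnil: "G ` loc_sub qs.Sb Qb' \<sigma>b' (nil_part (E Quot I) qs.Db i) = nil_part Qb ?Dbl i" for i
  proof -
    have ls: "loc_sub qs.Sb Qb' \<sigma>b' Ms = {fr Qb' \<sigma>b' s m | s m. s \<in> qs.Sb \<and> m \<in> Ms}" for Ms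
      unfolding loc_sub_def fr_def by simp
    let ?N = "nil_part (E Quot I) qs.Db i"
    have "G ` {fr Qb' \<sigma>b' s m | s m. s \<in> qs.Sb \<and> m \<in> ?N} = {fr Qb \<sigma>b s m | s m. s \<in> qs.Sb \<and> m \<in> ?N}"
    proof
      show "G ` {fr Qb' \<sigma>b' s m | s m. s \<in> qs.Sb \<and> m \<in> ?N} \<subseteq> {fr Qb \<sigma>b s m | s m. s \<in> qs.Sb \<and> m \<in> ?N}"
      proof
        fix y assume "y \<in> G ` {fr Qb' \<sigma>b' s m | s m. s \<in> qs.Sb \<and> m \<in> ?N}"
        then obtain s m where sm: "s \<in> qs.Sb" "m \<in> ?N" "y = G (fr Qb' \<sigma>b' s m)" by blast
        then have "y = fr Qb \<sigma>b s m" using Gfr[OF sm(1)] subsetD[OF Lb.nil_part_sub_all sm(2)] by simp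
        then show "y \<in> {fr Qb \<sigma>b s m | s m. s \<in> qs.Sb \<and> m \<in> ?N}" using sm(1,2) by blast
      qed
    next
      show "{fr Qb \<sigma>b s m | s m. s \<in> qs.Sb \<and> m \<in> ?N} \<subseteq> G ` {fr Qb' \<sigma>b' s m | s m. s \<in> qs.Sb \<and> m \<in> ?N}"
      proof
        fix y assume "y \<in> {fr Qb \<sigma>b s m | s m. s \<in> qs.Sb \<and> m \<in> ?N}"
        then obtain s m where sm: "s \<in> qs.Sb" "m \<in> ?N" "y = fr Qb \<sigma>b s m" by blast
        then have "y = G (fr Qb' \<sigma>b' s m)" using Gfr[OF sm(1)] subsetD[OF Lb.nil_part_sub_all sm(2)] by simp
        moreover have "fr Qb' \<sigma>b' s m \<in> {fr Qb' \<sigma>b' s m | s m. s \<in> qs.Sb \<and> m \<in> ?N}" using sm(1,2) by blast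
        ultimately show "y \<in> G ` {fr Qb' \<sigma>b' s m | s m. s \<in> qs.Sb \<and> m \<in> ?N}" by (rule image_eqI)
      qed
    qed
    then show ?thesis unfolding ls Lb.Mfin[OF disjI2[OF assb]] Lb.loc_sub_fr .
  qed
  show ?thesis
  proof (intro conjI)
    show "\<exists>f. alg_iso K Qb (\<lambda>k. \<sigma>b (I +> phi k)) Q (\<sigma> \<circ> phi) f"
      unfolding alg_iso_def by (intro exI[of _ f] conjI fiso ballI compat)
    show "\<exists>g h. alg_iso K Qb' (\<lambda>k. \<sigma>b' (I +> phi k)) (Nring Qb ?Dbl) (\<lambda>k. \<sigma>b (I +> phi k)) g \<and>
            alg_iso K (Nring Qb ?Dbl) (\<lambda>k. \<sigma>b (I +> phi k)) (Nring Q ?Dl) (\<sigma> \<circ> phi) h \<and>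
            (\<forall>i. g ` loc_sub qs.Sb Qb' \<sigma>b' (nil_part (E Quot I) qs.Db i) = nil_part Qb ?Dbl i \<and>
                 h ` nil_part Qb ?Dbl i = nil_part Q ?Dl i)"
      unfolding alg_iso_def
      by (intro exI[of _ G] exI[of _ f] conjI Giso hiso ballI allI gcompat compat gnil fnil)
  qed
qed

end

theorem proposition2p6:
  fixes K :: "'k ring" and E :: "'e ring" and phi :: "'k \<Rightarrow> 'e"
    and A :: "'e set" and \<Delta> :: "('e \<Rightarrow> 'e) set" and I :: "'e set" and S :: "'e set"
  assumes "field K"
    and "kalgebra K E phi"
    and "subalgebra K E phi A"
    and "\<forall>d\<in>\<Delta>. der_A E A d"
    and "ideal I E"
    and "left_denominator_set E S"
    and "ass E S = I"
    and "S \<subseteq> nil_part E \<Delta> 0"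
  shows
   \<comment> \<open>(1)\<close>
   "(\<forall>d\<in>\<Delta>. d ` I \<subseteq> I) \<and>
    (\<forall>d\<in>\<Delta>. der_A (E Quot I) ((\<lambda>a. I +>\<^bsub>E\<^esub> a) ` A) (quot_der E I d) \<and>
        (\<forall>e\<in>carrier E. quot_der E I d (I +>\<^bsub>E\<^esub> e) = I +>\<^bsub>E\<^esub> d e))
   \<comment> \<open>(2)\<close>
    \<and> (finite \<Delta> \<longrightarrow> left_denominator_set (Nring E \<Delta>) S \<and>
         ass (Nring E \<Delta>) S = nil_all E \<Delta> \<inter> I)
   \<comment> \<open>(3) and (4)\<close>
    \<and> (finite \<Delta> \<longrightarrow>
        (\<forall>(Q :: 'q ring) \<sigma> (Q' :: 'q2 ring) \<sigma>'.
           left_fractions E S Q \<sigma> \<longrightarrow> left_fractions (Nring E \<Delta>) S Q' \<sigma>' \<longrightarrow>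
           (\<exists>f. alg_iso K (Nring Q (loc_ders E S Q \<sigma> \<Delta>)) (\<sigma> \<circ> phi) Q' (\<sigma>' \<circ> phi) f \<and>
                (\<forall>i. f ` nil_part Q (loc_ders E S Q \<sigma> \<Delta>) i
                       = loc_sub S Q' \<sigma>' (nil_part E \<Delta> i)))))
   \<comment> \<open>(5)\<close>
    \<and> left_denominator_set (E Quot I) ((\<lambda>s. I +>\<^bsub>E\<^esub> s) ` S)
    \<and> (\<forall>(Q :: 'q ring) \<sigma> (Qb :: 'q3 ring) \<sigma>b (Qb' :: 'q4 ring) \<sigma>b'.
         left_fractions E S Q \<sigma> \<longrightarrow>
         left_fractions (E Quot I) ((\<lambda>s. I +>\<^bsub>E\<^esub> s) ` S) Qb \<sigma>b \<longrightarrow>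
         left_fractions (Nring (E Quot I) (quot_der E I ` \<Delta>)) ((\<lambda>s. I +>\<^bsub>E\<^esub> s) ` S) Qb' \<sigma>b' \<longrightarrow>
         (\<exists>f. alg_iso K Qb (\<lambda>k. \<sigma>b (I +>\<^bsub>E\<^esub> phi k)) Q (\<sigma> \<circ> phi) f) \<and>
         (\<exists>g h.
            alg_iso K Qb' (\<lambda>k. \<sigma>b' (I +>\<^bsub>E\<^esub> phi k))
              (Nring Qb (loc_ders (E Quot I) ((\<lambda>s. I +>\<^bsub>E\<^esub> s) ` S) Qb \<sigma>b (quot_der E I ` \<Delta>)))
              (\<lambda>k. \<sigma>b (I +>\<^bsub>E\<^esub> phi k)) g \<and>
            alg_iso K
              (Nring Qb (loc_ders (E Quot I) ((\<lambda>s. I +>\<^bsub>E\<^esub> s) ` S) Qb \<sigma>b (quot_der E I ` \<Delta>)))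
              (\<lambda>k. \<sigma>b (I +>\<^bsub>E\<^esub> phi k))
              (Nring Q (loc_ders E S Q \<sigma> \<Delta>)) (\<sigma> \<circ> phi) h \<and>
            (\<forall>i. g ` loc_sub ((\<lambda>s. I +>\<^bsub>E\<^esub> s) ` S) Qb' \<sigma>b'
                          (nil_part (E Quot I) (quot_der E I ` \<Delta>) i)
                   = nil_part Qb (loc_ders (E Quot I) ((\<lambda>s. I +>\<^bsub>E\<^esub> s) ` S) Qb \<sigma>b (quot_der E I ` \<Delta>)) i \<and>
                 h ` nil_part Qb (loc_ders (E Quot I) ((\<lambda>s. I +>\<^bsub>E\<^esub> s) ` S) Qb \<sigma>b (quot_der E I ` \<Delta>)) i
                   = nil_part Q (loc_ders E S Q \<sigma> \<Delta>) i)))"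
proof -
  interpret M: msit K E phi A \<Delta> I S
    by (rule msit.intro) (use assms in blast)+
  show ?thesis
  proof (intro conjI)
    show "\<forall>d\<in>\<Delta>. d ` I \<subseteq> I" using M.part1 by (rule conjunct1)
    show "\<forall>d\<in>\<Delta>. der_A (E Quot I) ((\<lambda>a. I +>\<^bsub>E\<^esub> a) ` A) (quot_der E I d) \<and>
        (\<forall>e\<in>carrier E. quot_der E I d (I +>\<^bsub>E\<^esub> e) = I +>\<^bsub>E\<^esub> d e)" using M.part1 by (rule conjunct2)
    show "finite \<Delta> \<longrightarrow> left_denominator_set (Nring E \<Delta>) S \<and> ass (Nring E \<Delta>) S = nil_all E \<Delta> \<inter> I"
      by (rule M.part2)
    show "left_denominator_set (E Quot I) ((\<lambda>s. I +>\<^bsub>E\<^esub> s) ` S)" by (rule M.qs.q_lds)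
  next
    show "finite \<Delta> \<longrightarrow>
        (\<forall>(Q :: 'q ring) \<sigma> (Q' :: 'q2 ring) \<sigma>'.
           left_fractions E S Q \<sigma> \<longrightarrow> left_fractions (Nring E \<Delta>) S Q' \<sigma>' \<longrightarrow>
           (\<exists>f. alg_iso K (Nring Q (loc_ders E S Q \<sigma> \<Delta>)) (\<sigma> \<circ> phi) Q' (\<sigma>' \<circ> phi) f \<and>
                (\<forall>i. f ` nil_part Q (loc_ders E S Q \<sigma> \<Delta>) i
                       = loc_sub S Q' \<sigma>' (nil_part E \<Delta> i))))"
      apply (intro impI allI)
      apply (rule M.part3)
        apply assumption+
      done
  next
    show "\<forall>(Q :: 'q ring) \<sigma> (Qb :: 'q3 ring) \<sigma>b (Qb' :: 'q4 ring) \<sigma>b'.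
         left_fractions E S Q \<sigma> \<longrightarrow>
         left_fractions (E Quot I) ((\<lambda>s. I +>\<^bsub>E\<^esub> s) ` S) Qb \<sigma>b \<longrightarrow>
         left_fractions (Nring (E Quot I) (quot_der E I ` \<Delta>)) ((\<lambda>s. I +>\<^bsub>E\<^esub> s) ` S) Qb' \<sigma>b' \<longrightarrow>
         (\<exists>f. alg_iso K Qb (\<lambda>k. \<sigma>b (I +>\<^bsub>E\<^esub> phi k)) Q (\<sigma> \<circ> phi) f) \<and>
         (\<exists>g h.
            alg_iso K Qb' (\<lambda>k. \<sigma>b' (I +>\<^bsub>E\<^esub> phi k))
              (Nring Qb (loc_ders (E Quot I) ((\<lambda>s. I +>\<^bsub>E\<^esub> s) ` S) Qb \<sigma>b (quot_der E I ` \<Delta>)))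
              (\<lambda>k. \<sigma>b (I +>\<^bsub>E\<^esub> phi k)) g \<and>
            alg_iso K
              (Nring Qb (loc_ders (E Quot I) ((\<lambda>s. I +>\<^bsub>E\<^esub> s) ` S) Qb \<sigma>b (quot_der E I ` \<Delta>)))
              (\<lambda>k. \<sigma>b (I +>\<^bsub>E\<^esub> phi k))
              (Nring Q (loc_ders E S Q \<sigma> \<Delta>)) (\<sigma> \<circ> phi) h \<and>
            (\<forall>i. g ` loc_sub ((\<lambda>s. I +>\<^bsub>E\<^esub> s) ` S) Qb' \<sigma>b'
                          (nil_part (E Quot I) (quot_der E I ` \<Delta>) i)
                   = nil_part Qb (loc_ders (E Quot I) ((\<lambda>s. I +>\<^bsub>E\<^esub> s) ` S) Qb \<sigma>b (quot_der E I ` \<Delta>)) i \<and>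
                 h ` nil_part Qb (loc_ders (E Quot I) ((\<lambda>s. I +>\<^bsub>E\<^esub> s) ` S) Qb \<sigma>b (quot_der E I ` \<Delta>)) i
                   = nil_part Q (loc_ders E S Q \<sigma> \<Delta>) i))"
      apply (intro impI allI)
      apply (rule M.part5)
        apply assumption+
      done
  qed
qed

end
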